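(* Let $h\in\mathcal{L}[t]$ be such that its Newton polygon $N_h$ has at least two edges, and let $P=(d,e)$ be the first break point of $N_h$ (the break point with least $x$-coordinate). Then: (1) there are $f,g\in\mathcal{L}[t]$ with $\deg_t(f)=d$, $N_f$ consisting of exactly the first edge of $N_h$, and $h=f\cdot g$; (2) there are $f,g\in\mathcal{L}[t]$ with $\deg_t(f)=d$, $N_f$ consisting of exactly the first edge of $N_h$, and $h=g\cdot f$.
   Context: $(\mathcal{L},v)$ is a complete discretely valued skew field (division ring with $v:\mathcal{L}\to\mathbb{Z}\cup\{\infty\}$, $v(x)=\infty\iff x=0$, $v(x+y)\ge\min\{v(x),v(y)\}$, $v(xy)=v(x)+v(y)$, such that every series $\sum x_i$ with $v(x_i)\to\infty$ converges). $\mathcal{L}[t]$ is the polynomial ring in a central indeterminate $t$. The Newton polygon $N_f$ of $f=\sum a_it^i$ is the lower convex hull of the points $(i,v(a_i))$ with $a_i\ne0$; a break point is a vertex where two edges meet; an edge from $(i,w_i)$ to $(j,w_j)$ has length $|j-i|$ and slope $(w_j-w_i)/(j-i)$. *)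

theory Defs
  imports "HOL-Analysis.Analysis" "HOL-Library.Extended_Real"
begin

definition discrete_valuation :: "('a::division_ring \<Rightarrow> ereal) \<Rightarrow> bool" where
  "discrete_valuation v \<longleftrightarrow>
     (\<forall>x. v x = \<infinity> \<longleftrightarrow> x = 0) \<and>
     (\<forall>x. x \<noteq> 0 \<longrightarrow> (\<exists>n::int. v x = ereal (of_int n))) \<and>
     (\<forall>x y. v (x + y) \<ge> min (v x) (v y)) \<and>
     (\<forall>x y. v (x * y) = v x + v y)"

definition complete_valuation :: "('a::division_ring \<Rightarrow> ereal) \<Rightarrow> bool" where
  "complete_valuation v \<longleftrightarrow>
     (\<forall>x :: nat \<Rightarrow> 'a. ((\<lambda>i. v (x i)) \<longlonglongrightarrow> \<infinity>) \<longrightarrow>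
        (\<exists>s. (\<lambda>n. v (s - (\<Sum>i<n. x i))) \<longlonglongrightarrow> \<infinity>))"

text \<open>Polynomials in a central indeterminate t over a (possibly noncommutative) ring,
  represented by their coefficient sequences with finite support.\<close>
definition is_poly :: "(nat \<Rightarrow> 'a::zero) \<Rightarrow> bool" where
  "is_poly f \<longleftrightarrow> finite {i. f i \<noteq> 0}"

definition pmul :: "(nat \<Rightarrow> 'a::semiring_0) \<Rightarrow> (nat \<Rightarrow> 'a) \<Rightarrow> nat \<Rightarrow> 'a" where
  "pmul f g = (\<lambda>n. \<Sum>i\<le>n. f i * g (n - i))"

definition pdeg :: "(nat \<Rightarrow> 'a::zero) \<Rightarrow> nat" where
  "pdeg f = (if {i. f i \<noteq> 0} = {} then 0 else Max {i. f i \<noteq> 0})"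

text \<open>Newton polygon: lower boundary of the convex hull of the points (i, v(a_i)), a_i \<noteq> 0.\<close>
definition np_points :: "('a::zero \<Rightarrow> ereal) \<Rightarrow> (nat \<Rightarrow> 'a) \<Rightarrow> (real \<times> real) set" where
  "np_points v f = {(real i, real_of_ereal (v (f i))) | i. f i \<noteq> 0}"

definition np_region :: "('a::zero \<Rightarrow> ereal) \<Rightarrow> (nat \<Rightarrow> 'a) \<Rightarrow> (real \<times> real) set" where
  "np_region v f = {p + (0, t) | p t. p \<in> convex hull (np_points v f) \<and> t \<ge> 0}"

definition newton_polygon :: "('a::zero \<Rightarrow> ereal) \<Rightarrow> (nat \<Rightarrow> 'a) \<Rightarrow> (real \<times> real) set" where
  "newton_polygon v f = {p \<in> np_region v f. \<forall>y < snd p. (fst p, y) \<notin> np_region v f}"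

definition np_vertices :: "('a::zero \<Rightarrow> ereal) \<Rightarrow> (nat \<Rightarrow> 'a) \<Rightarrow> (real \<times> real) set" where
  "np_vertices v f = {p. p extreme_point_of newton_polygon v f}"

definition np_num_edges :: "('a::zero \<Rightarrow> ereal) \<Rightarrow> (nat \<Rightarrow> 'a) \<Rightarrow> nat" where
  "np_num_edges v f = card (np_vertices v f) - 1"

definition np_break_points :: "('a::zero \<Rightarrow> ereal) \<Rightarrow> (nat \<Rightarrow> 'a) \<Rightarrow> (real \<times> real) set" where
  "np_break_points v f = {p \<in> np_vertices v f.
      (\<exists>q \<in> newton_polygon v f. fst q < fst p) \<and> (\<exists>q \<in> newton_polygon v f. fst p < fst q)}"

definition np_left_end :: "('a::zero \<Rightarrow> ereal) \<Rightarrow> (nat \<Rightarrow> 'a) \<Rightarrow> real \<times> real" where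
  "np_left_end v f = (THE p. p \<in> newton_polygon v f \<and> (\<forall>q \<in> newton_polygon v f. fst p \<le> fst q))"

end

theory Submission
  imports Defs
begin

locale dv =
  fixes v :: "'a::division_ring \<Rightarrow> ereal"
  assumes dv: "discrete_valuation v"
begin

lemmas dvp = dv[unfolded discrete_valuation_def]
lemma v_inf: "v x = \<infinity> \<longleftrightarrow> x = 0" using dvp[THEN conjunct1] by (rule spec)
lemma v_fin: "x \<noteq> 0 \<Longrightarrow> \<exists>n::int. v x = ereal (of_int n)" using dvp[THEN conjunct2, THEN conjunct1] by blast
lemma v_add: "min (v x) (v y) \<le> v (x + y)" using dvp[THEN conjunct2, THEN conjunct2, THEN conjunct1] by blast
lemma v_mult: "v (x * y) = v x + v y" using dvp[THEN conjunct2, THEN conjunct2, THEN conjunct2] by blast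
lemma v0[simp]: "v 0 = \<infinity>" using v_inf by simp
lemma v_real: assumes "x \<noteq> 0" shows "v x = ereal (real_of_ereal (v x))"
proof -
  obtain n::int where "v x = ereal (of_int n)" using v_fin[OF assms] by blast
  then show ?thesis by simp
qed
lemma v1[simp]: "v 1 = 0"
proof -
  obtain r where r: "v 1 = ereal r" using v_real[of 1] by auto
  have "v 1 = v 1 + v 1" using v_mult[of 1 1] by simp
  then have "r = r + r" using r by simp
  then show ?thesis using r by (simp add: zero_ereal_def)
qed
lemma vm1[simp]: "v (-1) = 0"
proof -
  obtain r where r: "v (-1) = ereal r" using v_real[of "-1"] by auto
  have "v 1 = v (-1) + v (-1)" using v_mult[of "-1" "-1"] by simp
  then have "0 = r + r" using r by (simp add: zero_ereal_def)
  then show ?thesis using r by (simp add: zero_ereal_def)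
qed
lemma v_uminus[simp]: "v (- x) = v x"
  using v_mult[of "-1" x] by simp
lemma v_diff: "min (v x) (v y) \<le> v (x - y)"
  using v_add[of x "-y"] by simp
lemma v_strict: assumes "v a < v b" shows "v (a + b) = v a"
proof -
  have 1: "min (v a) (v b) \<le> v (a + b)" by (rule v_add)
  have "min (v (a+b)) (v b) \<le> v ((a+b) - b)" by (rule v_diff)
  then have "min (v (a+b)) (v b) \<le> v a" by simp
  then show ?thesis using 1 assms by (auto simp: min_def split: if_splits)
qed
lemma v_inverse: assumes "x \<noteq> 0" shows "v (inverse x) = - v x"
proof -
  obtain r where r: "v x = ereal r" using v_real[OF assms] by auto
  obtain s where s: "v (inverse x) = ereal s" using v_real[of "inverse x"] assms by auto
  have "v (x * inverse x) = 0" using assms by simp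
  then have "r + s = 0" using v_mult[of x "inverse x"] r s by (simp add: zero_ereal_def)
  then show ?thesis using r s by simp
qed
lemma v_sum: assumes "finite A" "\<And>i. i \<in> A \<Longrightarrow> b \<le> v (x i)" shows "b \<le> v (sum x A)"
  using assms
proof (induction A rule: finite_induct)
  case empty then show ?case by simp
next
  case (insert a A)
  then have "b \<le> v (x a)" "b \<le> v (sum x A)" by auto
  then have "b \<le> min (v (x a)) (v (sum x A))" by simp
  also have "\<dots> \<le> v (x a + sum x A)" by (rule v_add)
  finally show ?case using insert by simp
qed
end

definition dle :: "nat \<Rightarrow> (nat \<Rightarrow> 'a::zero) \<Rightarrow> bool" where
  "dle N p \<longleftrightarrow> (\<forall>i>N. p i = 0)"

definition pone :: "nat \<Rightarrow> 'a::{zero,one}" where "pone = (\<lambda>i. if i = 0 then 1 else 0)"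

lemma dle_is_poly: "dle N p \<Longrightarrow> is_poly p"
  unfolding dle_def is_poly_def by (metis (mono_tags, lifting) finite_atMost finite_subset mem_Collect_eq not_le subsetI atMost_iff)

lemma is_poly_dle: "is_poly p \<Longrightarrow> \<exists>N. dle N p"
  unfolding dle_def is_poly_def
  by (metis (mono_tags, lifting) finite_nat_set_iff_bounded_le mem_Collect_eq not_le)

lemma dle_mono: "dle M p \<Longrightarrow> M \<le> N \<Longrightarrow> dle N p" unfolding dle_def by auto

lemma pmul_zero_right[simp]: "pmul f (\<lambda>i. 0) = (\<lambda>i. 0)" unfolding pmul_def by simp

lemma pmul_one_right: "pmul (f::nat\<Rightarrow>'a::semiring_1) pone = f"
proof
  fix n
  have "pmul f pone n = (\<Sum>i\<le>n. if i = n then f i else 0)"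
    unfolding pmul_def pone_def by (rule sum.cong) auto
  also have "\<dots> = f n" by (simp add: sum.delta')
  finally show "pmul f pone n = f n" .
qed

lemma pmul_add_right: "pmul f (\<lambda>i. p i + q i) n = pmul f p n + pmul f q n"
  unfolding pmul_def by (simp add: distrib_left sum.distrib)
lemma pmul_add_left: "pmul (\<lambda>i. p i + q i) f n = pmul p f n + pmul q f n"
  unfolding pmul_def by (simp add: distrib_right sum.distrib)
lemma pmul_diff_right: "pmul (f::nat\<Rightarrow>'a::ring) (\<lambda>i. p i - q i) n = pmul f p n - pmul f q n"
  unfolding pmul_def by (simp add: right_diff_distrib sum_subtractf)
lemma pmul_diff_left: "pmul (\<lambda>i. p i - q i) (f::nat\<Rightarrow>'a::ring) n = pmul p f n - pmul q f n"
  unfolding pmul_def by (simp add: left_diff_distrib sum_subtractf)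
lemma pmul_minus_left: "pmul (\<lambda>i. - p i) (f::nat\<Rightarrow>'a::ring) n = - pmul p f n"
  unfolding pmul_def by (simp add: sum_negf)

lemma pmul_mono_right: "pmul f (\<lambda>i. if i = k then q else 0) n = (if k \<le> n then f (n - k) * q else 0)"
proof -
  have "pmul f (\<lambda>i. if i = k then q else 0) n = (\<Sum>j\<le>n. if j = n - k \<and> k \<le> n then f j * q else 0)"
    unfolding pmul_def by (rule sum.cong) auto
  also have "\<dots> = (if k \<le> n then f (n - k) * q else 0)"
    by (cases "k \<le> n") (simp_all add: sum.delta')
  finally show ?thesis .
qed

lemma dle_pmul: assumes "dle M p" "dle N q" shows "dle (M + N) (pmul p q)"
  unfolding dle_def pmul_def
proof (intro allI impI)
  fix n assume n: "n > M + N"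
  have "\<And>i. i \<le> n \<Longrightarrow> p i * q (n - i) = 0"
  proof -
    fix i assume "i \<le> n"
    show "p i * q (n - i) = 0"
    proof (cases "i > M")
      case True then show ?thesis using assms(1) unfolding dle_def by simp
    next
      case False then have "n - i > N" using n by linarith
      then show ?thesis using assms(2) unfolding dle_def by simp
    qed
  qed
  then show "(\<Sum>i\<le>n. p i * q (n - i)) = 0" by simp
qed

lemma ereal_add_less: "ereal a < x \<Longrightarrow> ereal b \<le> y \<Longrightarrow> ereal (a + b) < x + y"
  by (cases x; cases y) auto
lemma ereal_add_le: "ereal a \<le> x \<Longrightarrow> ereal b \<le> y \<Longrightarrow> ereal (a + b) \<le> x + y"
  by (cases x; cases y) auto

context dv begin

definition wb :: "real \<Rightarrow> real \<Rightarrow> (nat \<Rightarrow> 'a) \<Rightarrow> bool" where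
  "wb lam a p \<longleftrightarrow> (\<forall>i. ereal (a + lam * real i) \<le> v (p i))"

lemma wb_zero[simp]: "wb lam a (\<lambda>i. 0)" unfolding wb_def by simp

lemma wb_mono: "wb lam a p \<Longrightarrow> b \<le> a \<Longrightarrow> wb lam b p"
  unfolding wb_def by (meson ereal_less_eq(3) add_right_mono order_trans)

lemma wb_add: assumes "wb lam a p" "wb lam b q" shows "wb lam (min a b) (\<lambda>i. p i + q i)"
  unfolding wb_def
proof
  fix i
  have "ereal (min a b + lam * real i) \<le> ereal (a + lam * real i)" "ereal (min a b + lam * real i) \<le> ereal (b + lam * real i)" by auto
  then have "ereal (min a b + lam * real i) \<le> min (v (p i)) (v (q i))"
    using assms unfolding wb_def by (meson min.boundedI order_trans)
  also have "\<dots> \<le> v (p i + q i)" by (rule v_add)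
  finally show "ereal (min a b + lam * real i) \<le> v (p i + q i)" .
qed

lemma wb_minus: "wb lam a p \<Longrightarrow> wb lam a (\<lambda>i. - p i)" unfolding wb_def by simp

lemma wb_diff: assumes "wb lam a p" "wb lam b q" shows "wb lam (min a b) (\<lambda>i. p i - q i)"
  using wb_add[OF assms(1) wb_minus[OF assms(2)]] by simp

lemma wb_mul: assumes "wb lam a p" "wb lam b q" shows "wb lam (a + b) (pmul p q)"
  unfolding wb_def pmul_def
proof
  fix n
  show "ereal (a + b + lam * real n) \<le> v (\<Sum>i\<le>n. p i * q (n - i))"
  proof (rule v_sum)
    fix i assume "i \<in> {..n}"
    then have "real (n - i) = real n - real i" by auto
    then have eq: "a + b + lam * real n = (a + lam * real i) + (b + lam * real (n - i))" by (simp add: algebra_simps)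
    have "ereal ((a + lam * real i) + (b + lam * real (n - i))) \<le> v (p i) + v (q (n - i))"
      using assms unfolding wb_def by (intro ereal_add_le) auto
    then show "ereal (a + b + lam * real n) \<le> v (p i * q (n - i))" by (simp add: eq v_mult)
  qed simp
qed

end

context dv begin

lemma ldiv:
  assumes f1: "dle d f" and f2: "f d \<noteq> 0" and f3: "wb lam c f"
    and f4: "v (f d) = ereal (c + lam * real d)" and d0: "0 < d"
  shows "dle N E \<Longrightarrow> wb lam a E \<Longrightarrow> \<exists>Q R. (\<forall>i. E i = pmul f Q i + R i) \<and> (\<forall>i\<ge>d. R i = 0)
      \<and> dle (N - d) Q \<and> wb lam (a - c) Q \<and> wb lam a R"
proof (induction N arbitrary: E rule: less_induct)
  case (less N)
  show ?case
  proof (cases "N < d")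
    case True
    show ?thesis
      apply (rule exI[of _ "\<lambda>i. 0"], rule exI[of _ E])
      using less.prems True unfolding dle_def by auto
  next
    case False
    define q where "q = inverse (f d) * E N"
    define M where "M = (\<lambda>i::nat. if i = N - d then q else 0)"
    define E' where "E' = (\<lambda>i. E i - pmul f M i)"
    have pM: "pmul f M i = (if N - d \<le> i then f (i - (N - d)) * q else 0)" for i
      unfolding M_def by (rule pmul_mono_right)
    have "f d * q = E N" unfolding q_def using f2 by (simp add: mult.assoc[symmetric])
    then have EN: "E' N = 0" unfolding E'_def pM using False by simp
    have "dle (N - 1) E'"
      unfolding dle_def
    proof (intro allI impI)
      fix i assume i: "i > N - 1"
      show "E' i = 0"
      proof (cases "i = N")
        case True then show ?thesis using EN by simp
      next
        case False
        then have "i > N" using i d0 \<open>\<not> N < d\<close> by linarith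
        then have "E i = 0" "f (i - (N - d)) = 0" using less.prems(1) f1 \<open>\<not> N < d\<close> unfolding dle_def by auto
        then show ?thesis unfolding E'_def pM by simp
      qed
    qed
    have wM: "wb lam (a - c) M"
      unfolding wb_def
    proof
      fix i
      show "ereal (a - c + lam * real i) \<le> v (M i)"
      proof (cases "i = N - d \<and> E N \<noteq> 0")
        case True
        then have i: "i = N - d" and EN0: "E N \<noteq> 0" by auto
        obtain r where r: "v (E N) = ereal r" using v_real[OF EN0] by auto
        have "ereal (a + lam * real N) \<le> v (E N)" using less.prems(2) unfolding wb_def by auto
        then have ra: "a + lam * real N \<le> r" using r by simp
        have "v q = - v (f d) + v (E N)" unfolding q_def using f2 by (simp add: v_mult v_inverse)
        also have "\<dots> = ereal (r - (c + lam * real d))" using f4 r by simp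
        finally have vq: "v q = ereal (r - (c + lam * real d))" .
        have "real (N - d) = real N - real d" using \<open>\<not> N < d\<close> by auto
        then have "a - c + lam * real i \<le> r - (c + lam * real d)" using ra i by (simp add: algebra_simps)
        then show ?thesis unfolding M_def using i vq by simp
      next
        case False
        then show ?thesis unfolding M_def q_def by auto
      qed
    qed
    have "wb lam (c + (a - c)) (pmul f M)" by (rule wb_mul[OF f3 wM])
    then have wfM: "wb lam a (pmul f M)" by simp
    have "wb lam (min a a) E'" unfolding E'_def by (rule wb_diff[OF less.prems(2) wfM])
    then have wE': "wb lam a E'" by simp
    have "N - 1 < N" using False d0 by linarith
    from less.IH[OF this \<open>dle (N - 1) E'\<close> wE'] obtain Q R where
      QR: "\<forall>i. E' i = pmul f Q i + R i" "\<forall>i\<ge>d. R i = 0" "dle (N - 1 - d) Q" "wb lam (a - c) Q" "wb lam a R"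
      by blast
    show ?thesis
    proof (intro exI conjI)
      show "\<forall>i. E i = pmul f (\<lambda>i. Q i + M i) i + R i"
      proof
        fix i
        have "E i = E' i + pmul f M i" unfolding E'_def by simp
        then show "E i = pmul f (\<lambda>i. Q i + M i) i + R i" using QR(1) by (simp add: pmul_add_right algebra_simps)
      qed
      show "\<forall>i\<ge>d. R i = 0" by (rule QR(2))
      show "dle (N - d) (\<lambda>i. Q i + M i)" using QR(3) unfolding dle_def M_def by auto
      have "wb lam (min (a - c) (a - c)) (\<lambda>i. Q i + M i)" by (rule wb_add[OF QR(4) wM])
      then show "wb lam (a - c) (\<lambda>i. Q i + M i)" by simp
      show "wb lam a R" by (rule QR(5))
    qed
  qed
qed

end

locale dvc = dv +
  assumes cv: "complete_valuation v"
begin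

definition vlim :: "(nat \<Rightarrow> 'a) \<Rightarrow> bool" where
  "vlim a \<longleftrightarrow> ((\<lambda>K. v (a K)) \<longlonglongrightarrow> \<infinity>)"

lemma vlim_iff: "vlim a \<longleftrightarrow> (\<forall>r. eventually (\<lambda>K. ereal r < v (a K)) sequentially)"
  unfolding vlim_def tendsto_PInfty ..

lemma vlim_const: assumes "vlim (\<lambda>K. x)" shows "x = 0"
proof -
  have "v x = \<infinity>" using assms unfolding vlim_def LIMSEQ_const_iff .
  then show ?thesis using v_inf by simp
qed

lemma vlim_eq: assumes "vlim a" "\<And>K. a K = x" shows "x = 0"
proof -
  have "a = (\<lambda>K. x)" using assms(2) by auto
  then show ?thesis using assms(1) vlim_const by simp
qed

lemma vlim_add: assumes "vlim a" "vlim b" shows "vlim (\<lambda>K. a K + b K)"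
  unfolding vlim_iff
proof
  fix r
  have "eventually (\<lambda>K. ereal r < v (a K) \<and> ereal r < v (b K)) sequentially"
    using assms unfolding vlim_iff by (simp add: eventually_conj)
  then show "eventually (\<lambda>K. ereal r < v (a K + b K)) sequentially"
  proof (rule eventually_mono)
    fix K assume "ereal r < v (a K) \<and> ereal r < v (b K)"
    then have "ereal r < min (v (a K)) (v (b K))" by simp
    also have "\<dots> \<le> v (a K + b K)" by (rule v_add)
    finally show "ereal r < v (a K + b K)" .
  qed
qed

lemma vlim_uminus: "vlim a \<Longrightarrow> vlim (\<lambda>K. - a K)" unfolding vlim_def by simp

lemma vlim_diff: assumes "vlim a" "vlim b" shows "vlim (\<lambda>K. a K - b K)"
  using vlim_add[OF assms(1) vlim_uminus[OF assms(2)]] by simp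

lemma vlim_zero: "vlim (\<lambda>K. 0)" unfolding vlim_def by simp

lemma vlim_sum: assumes "finite A" "\<And>i. i \<in> A \<Longrightarrow> vlim (a i)" shows "vlim (\<lambda>K. \<Sum>i\<in>A. a i K)"
  using assms
proof (induction A rule: finite_induct)
  case empty then show ?case by (simp add: vlim_zero)
next
  case (insert x A)
  then show ?case by (simp add: vlim_add)
qed

lemma vlim_mult_right: assumes "vlim a" "\<And>K. ereal M \<le> v (b K)" shows "vlim (\<lambda>K. a K * b K)"
  unfolding vlim_iff
proof
  fix r
  have "eventually (\<lambda>K. ereal (r - M) < v (a K)) sequentially" using assms(1) unfolding vlim_iff by blast
  then show "eventually (\<lambda>K. ereal r < v (a K * b K)) sequentially"
  proof (rule eventually_mono)
    fix K assume "ereal (r - M) < v (a K)"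
    then have "ereal ((r - M) + M) < v (a K) + v (b K)" using assms(2) by (rule ereal_add_less)
    then show "ereal r < v (a K * b K)" by (simp add: v_mult)
  qed
qed

lemma vlim_mult_left: assumes "vlim a" "\<And>K. ereal M \<le> v (b K)" shows "vlim (\<lambda>K. b K * a K)"
  unfolding vlim_iff
proof
  fix r
  have "eventually (\<lambda>K. ereal (r - M) < v (a K)) sequentially" using assms(1) unfolding vlim_iff by blast
  then show "eventually (\<lambda>K. ereal r < v (b K * a K)) sequentially"
  proof (rule eventually_mono)
    fix K assume "ereal (r - M) < v (a K)"
    then have "ereal ((r - M) + M) < v (a K) + v (b K)" using assms(2) by (rule ereal_add_less)
    then show "ereal r < v (b K * a K)" by (simp add: v_mult add.commute)
  qed
qed

lemma vlim_bound: assumes "0 < \<beta>" "\<And>K. ereal (\<alpha> + real K * \<beta>) \<le> v (a K)" shows "vlim a"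
  unfolding vlim_iff eventually_sequentially
proof
  fix r
  obtain n where n: "(r - \<alpha>) / \<beta> < real n" using reals_Archimedean2 by blast
  show "\<exists>N. \<forall>K\<ge>N. ereal r < v (a K)"
  proof (intro exI allI impI)
    fix K assume K: "n \<le> K"
    have "r - \<alpha> < real n * \<beta>" using n assms(1) by (simp add: divide_less_eq)
    also have "\<dots> \<le> real K * \<beta>" using K assms(1) by simp
    finally have "ereal r < ereal (\<alpha> + real K * \<beta>)" by simp
    also have "\<dots> \<le> v (a K)" by (rule assms(2))
    finally show "ereal r < v (a K)" .
  qed
qed

lemma v_lower: "\<exists>M. ereal M \<le> v x"
proof (cases "x = 0")
  case True then show ?thesis by simp
next
  case False then show ?thesis using v_real[OF False] by (metis order_refl)
qed

lemma lim_exists: assumes "vlim (\<lambda>j. a (Suc j) - a j)" shows "\<exists>s. vlim (\<lambda>K. s - a K)"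
proof -
  obtain s where s: "(\<lambda>n. v (s - (\<Sum>i<n. a (Suc i) - a i))) \<longlonglongrightarrow> \<infinity>"
  proof -
    have "\<forall>x. (\<lambda>i. v (x i)) \<longlonglongrightarrow> \<infinity> \<longrightarrow> (\<exists>s. (\<lambda>n. v (s - sum x {..<n})) \<longlonglongrightarrow> \<infinity>)"
      using cv unfolding complete_valuation_def .
    then have "(\<lambda>i. v (a (Suc i) - a i)) \<longlonglongrightarrow> \<infinity> \<longrightarrow> (\<exists>s. (\<lambda>n. v (s - (\<Sum>i<n. a (Suc i) - a i))) \<longlonglongrightarrow> \<infinity>)"
      by (rule spec)
    then show ?thesis using assms that unfolding vlim_def by blast
  qed
  have eq: "(\<lambda>n. v (s - (\<Sum>i<n. a (Suc i) - a i))) = (\<lambda>K. v ((s + a 0) - a K))"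
    by (rule ext) (simp add: sum_lessThan_telescope algebra_simps)
  have "(\<lambda>K. v ((s + a 0) - a K)) \<longlonglongrightarrow> \<infinity>" using s unfolding eq .
  then show ?thesis unfolding vlim_def by blast
qed

lemma vlim_eventually: assumes "vlim a" shows "\<exists>K. ereal r < v (a K)"
  using assms unfolding vlim_iff eventually_sequentially by blast

end

context dvc begin

lemma core:
  assumes d0: "0 < d" and dN: "d \<le> N" and hN: "dle N h" and hw: "wb lam c h"
    and h0: "v (h 0) = ereal c" and hd: "h d \<noteq> 0" and hdv: "v (h d) = ereal (c + lam * real d)"
    and del: "0 < \<delta>" and hi: "\<And>i. i > d \<Longrightarrow> ereal (c + \<delta> + lam * real i) \<le> v (h i)"
  shows "\<exists>f g. dle d f \<and> f d = h d \<and> v (f 0) = ereal c \<and> wb lam c f \<and> dle (N - d) g \<and> h = pmul f g"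
proof -
  define f0 where "f0 = (\<lambda>i. if i \<le> d then h i else 0)"
  define Inv where "Inv = (\<lambda>k f g. dle d f \<and> f d = h d \<and> wb lam c f \<and> wb lam (c + \<delta>) (\<lambda>i. f i - f0 i)
     \<and> dle (N - d) g \<and> wb lam \<delta> (\<lambda>i. g i - pone i) \<and> dle N (\<lambda>i. h i - pmul f g i)
     \<and> wb lam (c + real (Suc k) * \<delta>) (\<lambda>i. h i - pmul f g i))"
  define PQR where "PQR = (\<lambda>k f g Q R. (\<forall>i. h i - pmul f g i = pmul f Q i + R i) \<and> (\<forall>i\<ge>d. R i = 0)
     \<and> dle (N - d) Q \<and> wb lam (real (Suc k) * \<delta>) Q \<and> wb lam (c + real (Suc k) * \<delta>) R)"
  define ch where "ch = (\<lambda>k fg. SOME QR. PQR k (fst fg) (snd fg) (fst QR) (snd QR))"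
  define step where "step = (\<lambda>k fg. ((\<lambda>i. fst fg i + snd (ch k fg) i), (\<lambda>i. snd fg i + fst (ch k fg) i)))"
  define S where "S = rec_nat (f0, pone) step"
  have S0: "S 0 = (f0, pone)" unfolding S_def by simp
  have SS: "S (Suc k) = step k (S k)" for k unfolding S_def by simp

  have exQR: "\<exists>Q R. PQR k f g Q R" if I: "Inv k f g" for k f g
  proof -
    have f: "dle d f" "f d \<noteq> 0" "wb lam c f" "v (f d) = ereal (c + lam * real d)"
      using I hd hdv unfolding Inv_def by auto
    have E: "dle N (\<lambda>i. h i - pmul f g i)" "wb lam (c + real (Suc k) * \<delta>) (\<lambda>i. h i - pmul f g i)"
      using I unfolding Inv_def by auto
    from ldiv[OF f d0 E] show ?thesis unfolding PQR_def by simp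
  qed

  have step_inv: "Inv (Suc k) (\<lambda>i. f i + R i) (\<lambda>i. g i + Q i)" if I: "Inv k f g" and P: "PQR k f g Q R" for k f g Q R
  proof -
    from I have I1: "dle d f" "f d = h d" "wb lam c f" "wb lam (c + \<delta>) (\<lambda>i. f i - f0 i)"
      "dle (N - d) g" "wb lam \<delta> (\<lambda>i. g i - pone i)"
      unfolding Inv_def by auto
    from P have P1: "\<And>i. h i - pmul f g i = pmul f Q i + R i" "\<And>i. i \<ge> d \<Longrightarrow> R i = 0"
      "dle (N - d) Q" "wb lam (real (Suc k) * \<delta>) Q" "wb lam (c + real (Suc k) * \<delta>) R"
      unfolding PQR_def by auto
    have kd: "\<delta> \<le> real (Suc k) * \<delta>" using del by simp
    have a1: "dle d (\<lambda>i. f i + R i)" using I1(1) P1(2) unfolding dle_def by auto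
    have a2: "f d + R d = h d" using I1(2) P1(2) by simp
    have "wb lam (min c (c + real (Suc k) * \<delta>)) (\<lambda>i. f i + R i)" by (rule wb_add[OF I1(3) P1(5)])
    then have a3: "wb lam c (\<lambda>i. f i + R i)" by (rule wb_mono) (use del in simp)
    have "wb lam (min (c + \<delta>) (c + real (Suc k) * \<delta>)) (\<lambda>i. (f i - f0 i) + R i)" by (rule wb_add[OF I1(4) P1(5)])
    then have "wb lam (c + \<delta>) (\<lambda>i. (f i - f0 i) + R i)" by (rule wb_mono) (use kd in simp)
    moreover have "(\<lambda>i. (f i - f0 i) + R i) = (\<lambda>i. (f i + R i) - f0 i)" by (auto simp: algebra_simps)
    ultimately have a4: "wb lam (c + \<delta>) (\<lambda>i. (f i + R i) - f0 i)" by simp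
    have a5: "dle (N - d) (\<lambda>i. g i + Q i)" using I1(5) P1(3) unfolding dle_def by auto
    have "wb lam (min \<delta> (real (Suc k) * \<delta>)) (\<lambda>i. (g i - pone i) + Q i)" by (rule wb_add[OF I1(6) P1(4)])
    then have "wb lam \<delta> (\<lambda>i. (g i - pone i) + Q i)" by (rule wb_mono) (use kd in simp)
    moreover have "(\<lambda>i. (g i - pone i) + Q i) = (\<lambda>i. (g i + Q i) - pone i)" by (auto simp: algebra_simps)
    ultimately have a6: "wb lam \<delta> (\<lambda>i. (g i + Q i) - pone i)" by simp
    define G where "G = (\<lambda>i. (g i + Q i) - pone i)"
    have eqE: "h i - pmul (\<lambda>i. f i + R i) (\<lambda>i. g i + Q i) i = - pmul R G i" for i
    proof -
      have "pmul R G i = pmul R g i + pmul R Q i - R i"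
        unfolding G_def by (simp add: pmul_diff_right pmul_add_right pmul_one_right)
      moreover have "pmul (\<lambda>i. f i + R i) (\<lambda>i. g i + Q i) i = pmul f g i + pmul f Q i + pmul R g i + pmul R Q i"
        by (simp add: pmul_add_right pmul_add_left)
      ultimately show ?thesis using P1(1)[of i] by (simp add: algebra_simps)
    qed
    have Rd: "dle (d - 1) R" using P1(2) unfolding dle_def by auto
    have Gd: "dle (N - d) G" using a5 unfolding G_def dle_def pone_def by auto
    have "dle (d - 1 + (N - d)) (pmul R G)" by (rule dle_pmul[OF Rd Gd])
    then have a7: "dle N (\<lambda>i. h i - pmul (\<lambda>i. f i + R i) (\<lambda>i. g i + Q i) i)"
      unfolding eqE dle_def using d0 dN by auto
    have "wb lam (c + real (Suc k) * \<delta> + \<delta>) (pmul R G)" unfolding G_def by (rule wb_mul[OF P1(5) a6])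
    then have a8: "wb lam (c + real (Suc (Suc k)) * \<delta>) (\<lambda>i. h i - pmul (\<lambda>i. f i + R i) (\<lambda>i. g i + Q i) i)"
      unfolding eqE by (auto simp: algebra_simps intro: wb_minus)
    show ?thesis unfolding Inv_def using a1 a2 a3 a4 a5 a6 a7 a8 by simp
  qed

  have Inv0: "Inv 0 f0 pone"
  proof -
    have "dle d f0" unfolding f0_def dle_def by auto
    moreover have "wb lam c f0" using hw unfolding f0_def wb_def by auto
    moreover have "dle (N - d) (pone :: nat \<Rightarrow> 'a)" unfolding pone_def dle_def by auto
    moreover have "dle N (\<lambda>i. h i - pmul f0 pone i)" using hN unfolding pmul_one_right f0_def dle_def by auto
    moreover have "wb lam (c + real (Suc 0) * \<delta>) (\<lambda>i. h i - pmul f0 pone i)"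
      unfolding pmul_one_right wb_def f0_def using hi by (auto simp: algebra_simps)
    ultimately show ?thesis unfolding Inv_def f0_def by simp
  qed
  define fK where "fK = (\<lambda>K. fst (S K))"
  define gK where "gK = (\<lambda>K. snd (S K))"
  define RR where "RR = (\<lambda>K. snd (ch K (S K)))"
  define QQ where "QQ = (\<lambda>K. fst (ch K (S K)))"
  have all: "Inv k (fK k) (gK k) \<and> PQR k (fK k) (gK k) (QQ k) (RR k)" for k
  proof (induction k)
    case 0
    have I: "Inv 0 (fK 0) (gK 0)" using Inv0 S0 unfolding fK_def gK_def by simp
    then have "\<exists>QR. PQR 0 (fK 0) (gK 0) (fst QR) (snd QR)" using exQR by auto
    then have "PQR 0 (fK 0) (gK 0) (QQ 0) (RR 0)" unfolding QQ_def RR_def ch_def fK_def gK_def by (rule someI_ex)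
    then show ?case using I by simp
  next
    case (Suc k)
    have "S (Suc k) = ((\<lambda>i. fK k i + RR k i), (\<lambda>i. gK k i + QQ k i))"
      unfolding SS step_def fK_def gK_def RR_def QQ_def by simp
    then have "fK (Suc k) = (\<lambda>i. fK k i + RR k i)" "gK (Suc k) = (\<lambda>i. gK k i + QQ k i)"
      unfolding fK_def gK_def by auto
    then have I: "Inv (Suc k) (fK (Suc k)) (gK (Suc k))" using step_inv Suc by auto
    then have "\<exists>QR. PQR (Suc k) (fK (Suc k)) (gK (Suc k)) (fst QR) (snd QR)" using exQR by auto
    then have "PQR (Suc k) (fK (Suc k)) (gK (Suc k)) (QQ (Suc k)) (RR (Suc k))"
      unfolding QQ_def RR_def ch_def fK_def gK_def by (rule someI_ex)
    then show ?case using I by simp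
  qed
  have fS: "fK (Suc k) i = fK k i + RR k i" and gS: "gK (Suc k) i = gK k i + QQ k i" for k i
    unfolding SS step_def fK_def gK_def RR_def QQ_def by simp_all

  have I_K: "dle d (fK K)" "fK K d = h d" "wb lam c (fK K)" "wb lam (c + \<delta>) (\<lambda>i. fK K i - f0 i)"
     "dle (N - d) (gK K)" "wb lam (c + real (Suc K) * \<delta>) (\<lambda>i. h i - pmul (fK K) (gK K) i)"
     "wb lam (real (Suc K) * \<delta>) (QQ K)" "wb lam (c + real (Suc K) * \<delta>) (RR K)" for K
    using all[of K] unfolding Inv_def PQR_def by auto
  have bnd: "ereal (a + real (Suc K) * \<delta> + lam * real i) \<le> v (p i) \<Longrightarrow> ereal ((a + \<delta> + lam * real i) + real K * \<delta>) \<le> v (p i)"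
    for a K i and p :: "nat \<Rightarrow> 'a" by (simp add: algebra_simps)
  have "\<forall>i. \<exists>s. vlim (\<lambda>K. s - fK K i)"
  proof
    fix i
    have "vlim (\<lambda>j. RR j i)"
      by (rule vlim_bound[OF del, of "c + \<delta> + lam * real i"]) (rule bnd, use I_K(8) in \<open>auto simp: wb_def\<close>)
    then show "\<exists>s. vlim (\<lambda>K. s - fK K i)" by (intro lim_exists) (simp add: fS)
  qed
  then obtain F where F: "\<And>i. vlim (\<lambda>K. F i - fK K i)" by metis
  have "\<forall>i. \<exists>s. vlim (\<lambda>K. s - gK K i)"
  proof
    fix i
    have "vlim (\<lambda>j. QQ j i)"
      by (rule vlim_bound[OF del, of "0 + \<delta> + lam * real i"]) (rule bnd, use I_K(7) in \<open>auto simp: wb_def\<close>)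
    then show "\<exists>s. vlim (\<lambda>K. s - gK K i)" by (intro lim_exists) (simp add: gS)
  qed
  then obtain G where G: "\<And>i. vlim (\<lambda>K. G i - gK K i)" by metis
  have dF: "dle d F" unfolding dle_def
  proof (intro allI impI)
    fix i assume "d < i"
    then have "\<And>K. F i - fK K i = F i" using I_K(1) unfolding dle_def by auto
    then show "F i = 0" using F[of i] vlim_eq by metis
  qed
  have dG: "dle (N - d) G" unfolding dle_def
  proof (intro allI impI)
    fix i assume "N - d < i"
    then have "\<And>K. G i - gK K i = G i" using I_K(5) unfolding dle_def by auto
    then show "G i = 0" using G[of i] vlim_eq by metis
  qed
  have Fd: "F d = h d"
  proof -
    have "\<And>K. F d - fK K d = F d - h d" using I_K(2) by auto
    then have "F d - h d = 0" using F[of d] vlim_eq by metis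
    then show ?thesis by simp
  qed
  have wF: "wb lam c F" unfolding wb_def
  proof
    fix i
    obtain K where K: "ereal (c + lam * real i) < v (F i - fK K i)" using vlim_eventually[OF F] by blast
    have "ereal (c + lam * real i) \<le> v (fK K i)" using I_K(3) unfolding wb_def by auto
    then have "ereal (c + lam * real i) \<le> min (v (F i - fK K i)) (v (fK K i))" using K by simp
    also have "\<dots> \<le> v ((F i - fK K i) + fK K i)" by (rule v_add)
    finally show "ereal (c + lam * real i) \<le> v (F i)" by simp
  qed
  have F0: "v (F 0) = ereal c"
  proof -
    obtain K where K: "ereal (c + \<delta>) < v (F 0 - fK K 0)" using vlim_eventually[OF F] by blast
    have "ereal (c + \<delta> + lam * real 0) \<le> v (fK K 0 - f0 0)" using I_K(4) unfolding wb_def by blast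
    then have "ereal (c + \<delta>) \<le> v (fK K 0 - f0 0)" by simp
    then have "ereal (c + \<delta>) \<le> min (v (F 0 - fK K 0)) (v (fK K 0 - f0 0))" using K by simp
    also have "\<dots> \<le> v ((F 0 - fK K 0) + (fK K 0 - f0 0))" by (rule v_add)
    finally have "ereal (c + \<delta>) \<le> v (F 0 - h 0)" unfolding f0_def by simp
    moreover have "ereal c < ereal (c + \<delta>)" using del by simp
    ultimately have "v (h 0) < v (F 0 - h 0)" unfolding h0 by (rule order_less_le_trans[rotated])
    then have "v (h 0 + (F 0 - h 0)) = v (h 0)" by (rule v_strict)
    then show ?thesis using h0 by simp
  qed
  have hFG: "h = pmul F G"
  proof
    fix n
    define a where "a = (\<lambda>K. (h n - pmul (fK K) (gK K) n) - pmul (\<lambda>i. F i - fK K i) G n - pmul (fK K) (\<lambda>i. G i - gK K i) n)"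
    have aK: "a K = h n - pmul F G n" for K
      unfolding a_def pmul_diff_left pmul_diff_right by (simp add: algebra_simps)
    have v1: "vlim (\<lambda>K. h n - pmul (fK K) (gK K) n)"
      by (rule vlim_bound[OF del, of "c + \<delta> + lam * real n"]) (rule bnd, use I_K(6) in \<open>auto simp: wb_def\<close>)
    have v2: "vlim (\<lambda>K. pmul (\<lambda>i. F i - fK K i) G n)"
      unfolding pmul_def
    proof (rule vlim_sum)
      fix i assume "i \<in> {..n}"
      obtain M where "ereal M \<le> v (G (n - i))" using v_lower by blast
      then show "vlim (\<lambda>K. (F i - fK K i) * G (n - i))" by (intro vlim_mult_right[OF F]) 
    qed simp
    have v3: "vlim (\<lambda>K. pmul (fK K) (\<lambda>i. G i - gK K i) n)"
      unfolding pmul_def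
    proof (rule vlim_sum)
      fix i assume "i \<in> {..n}"
      have "\<And>K. ereal (c + lam * real i) \<le> v (fK K i)" using I_K(3) unfolding wb_def by auto
      then show "vlim (\<lambda>K. fK K i * (G (n - i) - gK K (n - i)))" by (intro vlim_mult_left[OF G]) 
    qed simp
    have "vlim a" unfolding a_def by (intro vlim_diff v1 v2 v3)
    then have "h n - pmul F G n = 0" using aK by (rule vlim_eq)
    then show "h n = pmul F G n" by simp
  qed
  show ?thesis using dF Fd F0 wF dG hFG by blast
qed
end

lemma convex_above: "convex {q::real\<times>real. \<alpha> * fst q + \<beta> \<le> snd q}"
  unfolding convex_def
proof (clarsimp)
  fix a1 a2 b1 b2 u w :: real
  assume h: "\<alpha> * a1 + \<beta> \<le> a2" "\<alpha> * b1 + \<beta> \<le> b2" "0 \<le> u" "0 \<le> w" "u + w = 1"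
  have "u * (\<alpha> * a1 + \<beta>) \<le> u * a2" using h by (intro mult_left_mono) auto
  moreover have "w * (\<alpha> * b1 + \<beta>) \<le> w * b2" using h by (intro mult_left_mono) auto
  moreover have "\<alpha> * (u * a1 + w * b1) + \<beta> = u * (\<alpha> * a1 + \<beta>) + w * (\<alpha> * b1 + \<beta>)"
    using h(5) by (simp add: algebra_simps) (metis distrib_left mult.right_neutral)
  ultimately show "\<alpha> * (u * a1 + w * b1) + \<beta> \<le> u * a2 + w * b2" by linarith
qed

lemma convex_strip: "convex {q::real\<times>real. lo \<le> fst q \<and> fst q \<le> hi}"
proof -
  have "{q::real\<times>real. lo \<le> fst q \<and> fst q \<le> hi} = {lo..hi} \<times> UNIV" by auto
  then show ?thesis by (simp add: convex_Times)
qed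

lemma np_points_eq: "np_points v p = (\<lambda>i. (real i, real_of_ereal (v (p i)))) ` {i. p i \<noteq> 0}"
  unfolding np_points_def by auto

lemma region_sub:
  assumes "convex C" "np_points v p \<subseteq> C" "\<And>q t. q \<in> C \<Longrightarrow> 0 \<le> t \<Longrightarrow> q + (0, t) \<in> C"
  shows "np_region v p \<subseteq> C"
proof
  fix r assume "r \<in> np_region v p"
  then obtain q t where r: "r = q + (0, t)" "q \<in> convex hull (np_points v p)" "t \<ge> 0"
    unfolding np_region_def by blast
  have "convex hull (np_points v p) \<subseteq> C" by (rule hull_minimal[where S=convex, OF assms(2,1)])
  then show "r \<in> C" using r assms(3) by blast
qed

lemma region_above:
  assumes "\<And>i. p i \<noteq> 0 \<Longrightarrow> \<alpha> * real i + \<beta> \<le> real_of_ereal (v (p i))"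
    and "q \<in> np_region v p"
  shows "\<alpha> * fst q + \<beta> \<le> snd q"
proof -
  have "np_region v p \<subseteq> {q::real\<times>real. \<alpha> * fst q + \<beta> \<le> snd q}"
    by (rule region_sub[OF convex_above]) (use assms(1) in \<open>auto simp: np_points_def\<close>)
  then show ?thesis using assms(2) by blast
qed

lemma region_strip:
  assumes "\<And>i. p i \<noteq> 0 \<Longrightarrow> lo \<le> real i \<and> real i \<le> hi"
    and "q \<in> np_region v p"
  shows "lo \<le> fst q \<and> fst q \<le> hi"
proof -
  have "np_region v p \<subseteq> {q::real\<times>real. lo \<le> fst q \<and> fst q \<le> hi}"
    by (rule region_sub[OF convex_strip]) (use assms(1) in \<open>auto simp: np_points_def\<close>)
  then show ?thesis using assms(2) by blast
qed

lemma NP_region: "newton_polygon v p \<subseteq> np_region v p"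
  unfolding newton_polygon_def by auto

lemma NP_fun: assumes "q1 \<in> newton_polygon v p" "q2 \<in> newton_polygon v p" "fst q1 = fst q2"
  shows "q1 = q2"
proof -
  have "\<not> snd q1 < snd q2"
  proof
    assume "snd q1 < snd q2"
    then have "(fst q2, snd q1) \<notin> np_region v p" using assms(2) unfolding newton_polygon_def by blast
    moreover have "(fst q2, snd q1) \<in> np_region v p" using assms(1,3) unfolding newton_polygon_def
      by (metis (no_types, lifting) mem_Collect_eq prod.collapse)
    ultimately show False by blast
  qed
  moreover have "\<not> snd q2 < snd q1"
  proof
    assume "snd q2 < snd q1"
    then have "(fst q1, snd q2) \<notin> np_region v p" using assms(1) unfolding newton_polygon_def by blast
    moreover have "(fst q1, snd q2) \<in> np_region v p" using assms(2,3) unfolding newton_polygon_def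
      by (metis (no_types, lifting) mem_Collect_eq prod.collapse)
    ultimately show False by blast
  qed
  ultimately show ?thesis using assms(3) by (simp add: prod_eq_iff)
qed

lemma pts_region: "np_points v p \<subseteq> np_region v p"
proof
  fix q assume "q \<in> np_points v p"
  then have "q \<in> convex hull (np_points v p)" by (rule hull_inc)
  then show "q \<in> np_region v p" unfolding np_region_def
    by (intro CollectI exI[of _ q] exI[of _ "0::real"]) (simp add: zero_prod_def)
qed

lemma seg_region: assumes "A \<in> np_points v p" "B \<in> np_points v p"
  shows "closed_segment A B \<subseteq> np_region v p"
proof -
  have "closed_segment A B \<subseteq> convex hull (np_points v p)"
    by (rule closed_segment_subset) (use assms in \<open>auto intro: hull_inc\<close>)
  then show ?thesis unfolding np_region_def by force
qed

lemma lower_NP: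
  assumes "\<And>i. p i \<noteq> 0 \<Longrightarrow> \<alpha> * real i + \<beta> \<le> real_of_ereal (v (p i))"
    and "q \<in> np_region v p" "snd q = \<alpha> * fst q + \<beta>"
  shows "q \<in> newton_polygon v p"
  unfolding newton_polygon_def
proof (intro CollectI conjI allI impI)
  show "q \<in> np_region v p" by fact
  fix y assume "y < snd q"
  show "(fst q, y) \<notin> np_region v p"
  proof
    assume "(fst q, y) \<in> np_region v p"
    from region_above[OF assms(1) this] have "\<alpha> * fst q + \<beta> \<le> y" by simp
    then show False using assms(3) \<open>y < snd q\<close> by simp
  qed
qed

lemma seg_line: fixes a b :: real assumes "q \<in> closed_segment (a, \<alpha> * a + \<beta>) (b, \<alpha> * b + \<beta>)"
  shows "snd q = \<alpha> * fst q + \<beta>"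
proof -
  obtain u where "q = (1 - u) *\<^sub>R (a, \<alpha> * a + \<beta>) + u *\<^sub>R (b, \<alpha> * b + \<beta>)"
    using assms unfolding in_segment by blast
  then show ?thesis by (simp add: algebra_simps)
qed

lemma seg_x: fixes a b :: real assumes "q \<in> closed_segment (a, ya) (b, yb)" "a \<le> b"
  shows "a \<le> fst q \<and> fst q \<le> b"
proof -
  obtain u where u: "0 \<le> u" "u \<le> 1" "q = (1 - u) *\<^sub>R (a, ya) + u *\<^sub>R (b, yb)"
    using assms unfolding in_segment by blast
  then have "fst q = a + u * (b - a)" by (simp add: algebra_simps)
  moreover have "0 \<le> u * (b - a)" "u * (b - a) \<le> b - a" using u assms(2) by (auto simp: mult_left_le_one_le)
  ultimately show ?thesis by linarith
qed

lemma seg_mem: fixes a b x :: real assumes "a < b" "a \<le> x" "x \<le> b"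
  shows "(x, \<alpha> * x + \<beta>) \<in> closed_segment (a, \<alpha> * a + \<beta>) (b, \<alpha> * b + \<beta>)"
  unfolding in_segment
proof (intro exI conjI)
  define u where "u = (x - a) / (b - a)"
  show "0 \<le> u" "u \<le> 1" unfolding u_def using assms by auto
  have "u * (b - a) = x - a" unfolding u_def using assms by simp
  then have xe: "x = (1 - u) * a + u * b" by (simp add: algebra_simps)
  have "\<alpha> * x + \<beta> = (1 - u) * (\<alpha> * a + \<beta>) + u * (\<alpha> * b + \<beta>)" unfolding xe by (simp add: algebra_simps)
  then show "(x, \<alpha> * x + \<beta>) = (1 - u) *\<^sub>R (a, \<alpha> * a + \<beta>) + u *\<^sub>R (b, \<alpha> * b + \<beta>)"
    using xe by simp
qed

lemma seg_open: fixes a b x :: real assumes "a < x" "x < b"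
  shows "(x, \<alpha> * x + \<beta>) \<in> open_segment (a, \<alpha> * a + \<beta>) (b, \<alpha> * b + \<beta>)"
  unfolding in_segment
proof (intro exI conjI)
  define u where "u = (x - a) / (b - a)"
  show "(a, \<alpha> * a + \<beta>) \<noteq> (b, \<alpha> * b + \<beta>)" using assms by auto
  show "0 < u" "u < 1" unfolding u_def using assms by auto
  have "u * (b - a) = x - a" unfolding u_def using assms by simp
  then have xe: "x = (1 - u) * a + u * b" by (simp add: algebra_simps)
  have "\<alpha> * x + \<beta> = (1 - u) * (\<alpha> * a + \<beta>) + u * (\<alpha> * b + \<beta>)" unfolding xe by (simp add: algebra_simps)
  then show "(x, \<alpha> * x + \<beta>) = (1 - u) *\<^sub>R (a, \<alpha> * a + \<beta>) + u *\<^sub>R (b, \<alpha> * b + \<beta>)"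
    using xe by simp
qed


lemma seg_NP:
  fixes a b :: real
  assumes ab: "\<And>i. p i \<noteq> 0 \<Longrightarrow> \<alpha> * real i + \<beta> \<le> real_of_ereal (v (p i))"
    and A: "(a, \<alpha> * a + \<beta>) \<in> np_points v p" and B: "(b, \<alpha> * b + \<beta>) \<in> np_points v p"
  shows "closed_segment (a, \<alpha> * a + \<beta>) (b, \<alpha> * b + \<beta>) \<subseteq> newton_polygon v p"
proof
  fix q assume q: "q \<in> closed_segment (a, \<alpha> * a + \<beta>) (b, \<alpha> * b + \<beta>)"
  show "q \<in> newton_polygon v p"
    by (rule lower_NP[where p=p and v=v and \<alpha>=\<alpha> and \<beta>=\<beta>, OF ab]) (use seg_region[OF A B] q seg_line[OF q] in auto)
qed

lemma NP_seg:
  fixes p :: "nat \<Rightarrow> 'a::zero" and a b :: nat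
  assumes ab: "a < b" and pa: "p a \<noteq> 0" and pb: "p b \<noteq> 0" and supp: "\<And>i. p i \<noteq> 0 \<Longrightarrow> a \<le> i \<and> i \<le> b"
    and above: "\<And>i. p i \<noteq> 0 \<Longrightarrow> \<alpha> * real i + \<beta> \<le> real_of_ereal (v (p i))"
    and va: "real_of_ereal (v (p a)) = \<alpha> * real a + \<beta>" and vb: "real_of_ereal (v (p b)) = \<alpha> * real b + \<beta>"
  shows "newton_polygon v p = closed_segment (real a, \<alpha> * real a + \<beta>) (real b, \<alpha> * real b + \<beta>)"
proof
  have A: "(real a, \<alpha> * real a + \<beta>) \<in> np_points v p" using pa va unfolding np_points_def by (metis (mono_tags, lifting) mem_Collect_eq)
  have B: "(real b, \<alpha> * real b + \<beta>) \<in> np_points v p" using pb vb unfolding np_points_def by (metis (mono_tags, lifting) mem_Collect_eq)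
  show "closed_segment (real a, \<alpha> * real a + \<beta>) (real b, \<alpha> * real b + \<beta>) \<subseteq> newton_polygon v p"
    by (rule seg_NP[OF above A B])
  show "newton_polygon v p \<subseteq> closed_segment (real a, \<alpha> * real a + \<beta>) (real b, \<alpha> * real b + \<beta>)"
  proof
    fix q assume q: "q \<in> newton_polygon v p"
    then have qr: "q \<in> np_region v p" unfolding newton_polygon_def by blast
    have st: "real a \<le> fst q \<and> fst q \<le> real b" by (rule region_strip[OF _ qr]) (use supp in auto)
    have ab': "\<alpha> * fst q + \<beta> \<le> snd q" by (rule region_above[where p=p and v=v and \<alpha>=\<alpha> and \<beta>=\<beta>, OF above qr])
    have sm: "(fst q, \<alpha> * fst q + \<beta>) \<in> closed_segment (real a, \<alpha> * real a + \<beta>) (real b, \<alpha> * real b + \<beta>)"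
      using ab st by (intro seg_mem) auto
    have "\<not> \<alpha> * fst q + \<beta> < snd q"
    proof
      assume "\<alpha> * fst q + \<beta> < snd q"
      then have "(fst q, \<alpha> * fst q + \<beta>) \<notin> np_region v p" using q unfolding newton_polygon_def by blast
      moreover have "(fst q, \<alpha> * fst q + \<beta>) \<in> np_region v p" using seg_region[OF A B] sm by blast
      ultimately show False by blast
    qed
    then have "q = (fst q, \<alpha> * fst q + \<beta>)" using ab' by (simp add: prod_eq_iff)
    then show "q \<in> closed_segment (real a, \<alpha> * real a + \<beta>) (real b, \<alpha> * real b + \<beta>)" using sm by simp
  qed
qed

lemma two_zero: fixes u X Y :: real
  assumes "0 < u" "u < 1" "0 \<le> X" "0 \<le> Y" "(1 - u) * X + u * Y = 0"
  shows "X = 0 \<and> Y = 0"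
proof -
  have "0 \<le> (1 - u) * X" "0 \<le> u * Y" using assms by auto
  then have "(1 - u) * X = 0" "u * Y = 0" using assms(5) by linarith+
  then show ?thesis using assms(1,2) by auto
qed

lemma on_line_seg:
  fixes a b c :: "real \<times> real"
  assumes "\<alpha> * fst a + \<beta> \<le> snd a" "\<alpha> * fst b + \<beta> \<le> snd b"
    "c = (1 - u) *\<^sub>R a + u *\<^sub>R b" "0 < u" "u < 1" "snd c = \<alpha> * fst c + \<beta>"
  shows "snd a = \<alpha> * fst a + \<beta> \<and> snd b = \<alpha> * fst b + \<beta>"
proof -
  have "(1 - u) * (snd a - (\<alpha> * fst a + \<beta>)) + u * (snd b - (\<alpha> * fst b + \<beta>)) = snd c - (\<alpha> * fst c + \<beta>)"
    unfolding assms(3) by (simp add: algebra_simps)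
  then have "(1 - u) * (snd a - (\<alpha> * fst a + \<beta>)) + u * (snd b - (\<alpha> * fst b + \<beta>)) = 0" using assms(6) by simp
  from two_zero[OF assms(4,5) _ _ this] assms(1,2) show ?thesis by auto
qed


lemma first_edge:
  fixes h :: "nat \<Rightarrow> 'a::zero" and v :: "'a \<Rightarrow> ereal"
  assumes poly: "is_poly h" and bp: "(real d, e) \<in> np_break_points v h"
    and minb: "\<forall>q\<in>np_break_points v h. real d \<le> fst q"
  defines "w \<equiv> (\<lambda>i. real_of_ereal (v (h i)))"
  shows "\<exists>m lam. m < d \<and> h m \<noteq> 0 \<and> h d \<noteq> 0 \<and> (\<forall>i<m. h i = 0) \<and> e = w d \<and>
    w d = w m + lam * (real d - real m) \<and>
    (\<forall>i. h i \<noteq> 0 \<longrightarrow> w m + lam * (real i - real m) \<le> w i) \<and>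
    (\<forall>i. h i \<noteq> 0 \<and> d < i \<longrightarrow> w m + lam * (real i - real m) < w i) \<and>
    np_left_end v h = (real m, w m)"
proof -
  define NP where "NP = newton_polygon v h"
  define S where "S = {i. h i \<noteq> 0}"
  have finS: "finite S" using poly unfolding is_poly_def S_def .
  have Pext: "(real d, e) extreme_point_of NP" using bp unfolding np_break_points_def np_vertices_def NP_def by blast
  then have PNP: "(real d, e) \<in> NP" unfolding extreme_point_of_def by blast
  obtain q1 q2 where q1: "q1 \<in> NP" "fst q1 < real d" and q2: "q2 \<in> NP" "real d < fst q2"
    using bp unfolding np_break_points_def NP_def by auto
  have NPr: "q \<in> np_region v h" if "q \<in> NP" for q using that unfolding NP_def newton_polygon_def by blast
  have "S \<noteq> {}"
  proof
    assume "S = {}"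
    have "fst q1 + 1 \<le> fst q1 \<and> fst q1 \<le> fst q1 + 1"
      by (rule region_strip[OF _ NPr[OF q1(1)]]) (use \<open>S = {}\<close> S_def in auto)
    then show False by simp
  qed
  define m where "m = Min S"
  define n where "n = Max S"
  have mS: "m \<in> S" unfolding m_def using finS \<open>S \<noteq> {}\<close> by simp
  have m_le: "i \<in> S \<Longrightarrow> m \<le> i" for i unfolding m_def using finS by simp
  have le_n: "i \<in> S \<Longrightarrow> i \<le> n" for i unfolding n_def using finS by simp
  have strip: "real m \<le> fst q \<and> fst q \<le> real n" if "q \<in> NP" for q
    by (rule region_strip[OF _ NPr[OF that]]) (use m_le le_n S_def in auto)
  define T where "T = {i\<in>S. m < i}"
  have finT: "finite T" using finS unfolding T_def by simp
  have "T \<noteq> {}"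
  proof
    assume "T = {}"
    then have "\<And>i. i \<in> S \<Longrightarrow> i = m" using m_le unfolding T_def by force
    then have "\<And>q. q \<in> NP \<Longrightarrow> real m \<le> fst q \<and> fst q \<le> real m"
      by (intro region_strip[OF _ NPr]) (auto simp: S_def)
    then have "fst q1 = fst q2" using q1 q2 by (metis order_antisym)
    then show False using q1 q2 by simp
  qed
  define r where "r = (\<lambda>i. (w i - w m) / (real i - real m))"
  define lam where "lam = Min (r ` T)"
  have lamT: "lam \<in> r ` T" unfolding lam_def using finT \<open>T \<noteq> {}\<close> by simp
  have lam_le: "i \<in> T \<Longrightarrow> lam \<le> r i" for i unfolding lam_def using finT by simp
  define U where "U = {i\<in>T. r i = lam}"
  have "U \<noteq> {}" using lamT unfolding U_def by auto
  have finU: "finite U" using finT unfolding U_def by simp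
  define D where "D = Max U"
  have DU: "D \<in> U" unfolding D_def using finU \<open>U \<noteq> {}\<close> by simp
  have U_le: "i \<in> U \<Longrightarrow> i \<le> D" for i unfolding D_def using finU by simp
  have DS: "D \<in> S" and mD: "m < D" and rD: "r D = lam" using DU unfolding U_def T_def by auto
  define L where "L = (\<lambda>x::real. w m + lam * (x - real m))"
  have Lle: "L (real i) \<le> w i" if "i \<in> S" for i
  proof (cases "i = m")
    case True then show ?thesis unfolding L_def by simp
  next
    case False
    then have iT: "i \<in> T" using that m_le unfolding T_def by force
    then have pos: "real i - real m > 0" unfolding T_def by simp
    have "lam \<le> (w i - w m) / (real i - real m)" using lam_le[OF iT] unfolding r_def .
    then have "lam * (real i - real m) \<le> w i - w m" using pos by (simp add: le_divide_eq)
    then show ?thesis unfolding L_def by simp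
  qed
  have LD: "L (real D) = w D"
  proof -
    have pos: "real D - real m > 0" using mD by simp
    have "lam = (w D - w m) / (real D - real m)" using rD unfolding r_def by simp
    then have "lam * (real D - real m) = w D - w m" using pos by simp
    then show ?thesis unfolding L_def by simp
  qed
  have Lless: "L (real i) < w i" if "i \<in> S" "D < i" for i
  proof -
    have iT: "i \<in> T" using that mD unfolding T_def by auto
    then have pos: "real i - real m > 0" unfolding T_def by simp
    have "r i \<noteq> lam" using U_le[of i] that iT unfolding U_def by auto
    then have "lam < (w i - w m) / (real i - real m)" using lam_le[OF iT] unfolding r_def by simp
    then have "lam * (real i - real m) < w i - w m" using pos by (simp add: less_divide_eq)
    then show ?thesis unfolding L_def by simp
  qed
  define V where "V = {i\<in>S. D < i}"
  have finV: "finite V" using finS unfolding V_def by simp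
  define eta where "eta = Min (insert 1 ((\<lambda>i. (w i - L (real i)) / (real i - real D)) ` V))"
  have eta_pos: "eta > 0"
  proof -
    have "\<forall>x\<in>insert 1 ((\<lambda>i. (w i - L (real i)) / (real i - real D)) ` V). x > 0"
      using Lless unfolding V_def by auto
    then show ?thesis unfolding eta_def using finV by simp
  qed
  have eta_le: "i \<in> V \<Longrightarrow> eta \<le> (w i - L (real i)) / (real i - real D)" for i
    unfolding eta_def using finV by simp
  define L' where "L' = (\<lambda>x::real. L x + eta * (x - real D))"
  have L'le: "L' (real i) \<le> w i" if "i \<in> S" for i
  proof (cases "D < i")
    case True
    then have pos: "real i - real D > 0" by simp
    have "eta \<le> (w i - L (real i)) / (real i - real D)" using eta_le True that unfolding V_def by simp
    then have "eta * (real i - real D) \<le> w i - L (real i)" using pos by (simp add: le_divide_eq)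
    then show ?thesis unfolding L'_def by simp
  next
    case False
    then have "eta * (real i - real D) \<le> 0" using eta_pos by (simp add: mult_nonneg_nonpos)
    then show ?thesis using Lle[OF that] unfolding L'_def by simp
  qed
  define \<alpha> where "\<alpha> = lam"
  define \<beta> where "\<beta> = w m - lam * real m"
  have Lab: "L x = \<alpha> * x + \<beta>" for x unfolding L_def \<alpha>_def \<beta>_def by (simp add: algebra_simps)
  define \<alpha>' where "\<alpha>' = lam + eta"
  define \<beta>' where "\<beta>' = w m - lam * real m - eta * real D"
  have Lab': "L' x = \<alpha>' * x + \<beta>'" for x unfolding L'_def L_def \<alpha>'_def \<beta>'_def by (simp add: algebra_simps)
  have above: "\<And>i. h i \<noteq> 0 \<Longrightarrow> \<alpha> * real i + \<beta> \<le> real_of_ereal (v (h i))"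
    using Lle unfolding Lab S_def w_def by auto
  have above': "\<And>i. h i \<noteq> 0 \<Longrightarrow> \<alpha>' * real i + \<beta>' \<le> real_of_ereal (v (h i))"
    using L'le unfolding Lab' S_def w_def by auto
  have regA: "\<alpha> * fst q + \<beta> \<le> snd q" if "q \<in> NP" for q
    by (rule region_above[where p=h and v=v, OF above NPr[OF that]])
  have regA': "\<alpha>' * fst q + \<beta>' \<le> snd q" if "q \<in> NP" for q
    by (rule region_above[where p=h and v=v, OF above' NPr[OF that]])
  have Am: "w m = \<alpha> * real m + \<beta>" using Lab[of "real m"] unfolding L_def by simp
  have Dm: "w D = \<alpha> * real D + \<beta>" using Lab[of "real D"] LD by simp
  have Apts: "(real m, \<alpha> * real m + \<beta>) \<in> np_points v h"
    unfolding np_points_def Am[symmetric] w_def using mS unfolding S_def by blast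
  have Dpts: "(real D, \<alpha> * real D + \<beta>) \<in> np_points v h"
    unfolding np_points_def Dm[symmetric] w_def using DS unfolding S_def by blast
  have segNP: "closed_segment (real m, \<alpha> * real m + \<beta>) (real D, \<alpha> * real D + \<beta>) \<subseteq> NP"
    unfolding NP_def by (rule seg_NP[OF above Apts Dpts])
  have ANP: "(real m, \<alpha> * real m + \<beta>) \<in> NP" using segNP by auto
  have DNP: "(real D, \<alpha> * real D + \<beta>) \<in> NP" using segNP by auto
  have Dext: "(real D, \<alpha> * real D + \<beta>) extreme_point_of NP"
    unfolding extreme_point_of_def
  proof (intro conjI ballI DNP notI)
    fix a b assume a: "a \<in> NP" and b: "b \<in> NP" and o: "(real D, \<alpha> * real D + \<beta>) \<in> open_segment a b"
    then obtain u where u: "a \<noteq> b" "0 < u" "u < 1" "(real D, \<alpha> * real D + \<beta>) = (1 - u) *\<^sub>R a + u *\<^sub>R b"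
      unfolding in_segment by blast
    have l1: "snd a = \<alpha> * fst a + \<beta> \<and> snd b = \<alpha> * fst b + \<beta>"
      by (rule on_line_seg[OF regA[OF a] regA[OF b] u(4) u(2,3)]) simp
    have "snd (real D, \<alpha> * real D + \<beta>) = \<alpha>' * fst (real D, \<alpha> * real D + \<beta>) + \<beta>'"
      using Lab[of "real D"] Lab'[of "real D"] unfolding L'_def by simp
    then have l2: "snd a = \<alpha>' * fst a + \<beta>' \<and> snd b = \<alpha>' * fst b + \<beta>'"
      by (rule on_line_seg[OF regA'[OF a] regA'[OF b] u(4) u(2,3)])
    have ea: "eta * (fst a - real D) = (\<alpha>' * fst a + \<beta>') - (\<alpha> * fst a + \<beta>)"
      "eta * (fst b - real D) = (\<alpha>' * fst b + \<beta>') - (\<alpha> * fst b + \<beta>)"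
      unfolding \<alpha>_def \<beta>_def \<alpha>'_def \<beta>'_def by (simp_all add: algebra_simps)
    then have "eta * (fst a - real D) = 0" "eta * (fst b - real D) = 0" using l1 l2 by simp_all
    then have "fst a = real D" "fst b = real D" using eta_pos by simp_all
    then have "a = b" by (intro NP_fun[where v=v and p=h]) (use a b in \<open>simp_all add: NP_def\<close>)
    then show False using u(1) by simp
  qed
  have dm: "real m < real d" using strip[OF q1(1)] q1(2) by linarith
  have dD: "d = D"
  proof (rule ccontr)
    assume "d \<noteq> D"
    then consider "d < D" | "D < d" by linarith
    then show False
    proof cases
      case 1
      have sm: "(real d, \<alpha> * real d + \<beta>) \<in> closed_segment (real m, \<alpha> * real m + \<beta>) (real D, \<alpha> * real D + \<beta>)"
        using dm 1 mD by (intro seg_mem) auto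
      then have "(real d, \<alpha> * real d + \<beta>) \<in> NP" using segNP by auto
      then have Peq: "(real d, e) = (real d, \<alpha> * real d + \<beta>)"
        by (intro NP_fun[where v=v and p=h]) (use PNP in \<open>simp_all add: NP_def\<close>)
      have "(real d, \<alpha> * real d + \<beta>) \<in> open_segment (real m, \<alpha> * real m + \<beta>) (real D, \<alpha> * real D + \<beta>)"
        using dm 1 by (intro seg_open) auto
      then show False using Pext ANP DNP Peq unfolding extreme_point_of_def by auto
    next
      case 2
      have "(real D, \<alpha> * real D + \<beta>) \<in> np_break_points v h"
        unfolding np_break_points_def np_vertices_def
        using Dext ANP q2 mD 2 unfolding NP_def by force
      then have "real d \<le> real D" using minb by auto
      then show False using 2 by simp
    qed
  qed
  have eD: "e = w d"
  proof -
    have "(real d, e) = (real D, \<alpha> * real D + \<beta>)"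
      by (intro NP_fun[where v=v and p=h]) (use PNP DNP dD in \<open>simp_all add: NP_def\<close>)
    then show ?thesis using Dm dD by simp
  qed
  have left: "np_left_end v h = (real m, w m)"
    unfolding np_left_end_def
  proof (rule the_equality)
    show "(real m, w m) \<in> newton_polygon v h \<and> (\<forall>q\<in>newton_polygon v h. fst (real m, w m) \<le> fst q)"
      using ANP strip Am unfolding NP_def by auto
    fix p assume p: "p \<in> newton_polygon v h \<and> (\<forall>q\<in>newton_polygon v h. fst p \<le> fst q)"
    then have "fst p \<le> real m" using ANP unfolding NP_def by force
    moreover have "real m \<le> fst p" using strip p unfolding NP_def by blast
    ultimately have "fst p = fst (real m, \<alpha> * real m + \<beta>)" by simp
    then have "p = (real m, \<alpha> * real m + \<beta>)"
      by (intro NP_fun[where v=v and p=h]) (use p ANP in \<open>simp_all add: NP_def\<close>)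
    then show "p = (real m, w m)" using Am by simp
  qed
  show ?thesis
  proof (intro exI[of _ m] exI[of _ lam] conjI allI impI)
    show "m < d" using dm by simp
    show "h m \<noteq> 0" using mS unfolding S_def by simp
    show "h d \<noteq> 0" using DS dD unfolding S_def by simp
    show "h i = 0" if "i < m" for i using m_le[of i] that unfolding S_def by force
    show "e = w d" by (rule eD)
    show "w d = w m + lam * (real d - real m)" using LD dD unfolding L_def by simp
    show "w m + lam * (real i - real m) \<le> w i" if "h i \<noteq> 0" for i using Lle[of i] that unfolding L_def S_def by simp
    show "w m + lam * (real i - real m) < w i" if "h i \<noteq> 0 \<and> d < i" for i using Lless[of i] that dD unfolding L_def S_def by simp
    show "np_left_end v h = (real m, w m)" by (rule left)
  qed
qed

lemma pmul_shift_left: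
  fixes f' g h :: "nat \<Rightarrow> 'a::semiring_0"
  assumes hs: "\<And>n. h (n + m) = pmul f' g n" and hz: "\<And>n. n < m \<Longrightarrow> h n = 0"
  shows "h = pmul (\<lambda>i. if i < m then 0 else f' (i - m)) g"
proof
  fix n
  define F where "F = (\<lambda>i. if i < m then 0 else f' (i - m))"
  show "h n = pmul (\<lambda>i. if i < m then 0 else f' (i - m)) g n"
    unfolding F_def[symmetric]
  proof (cases "n < m")
    case True
    then have "pmul F g n = 0" unfolding pmul_def F_def by simp
    then show "h n = pmul F g n" using hz True by simp
  next
    case False
    have "pmul F g n = (\<Sum>i\<in>{m..n}. F i * g (n - i))"
      unfolding pmul_def by (rule sum.mono_neutral_right) (auto simp: F_def)
    also have "\<dots> = (\<Sum>i\<in>{0 + m..(n - m) + m}. F i * g (n - i))" using False by simp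
    also have "\<dots> = (\<Sum>j\<in>{0..n - m}. F (j + m) * g (n - (j + m)))" by (rule sum.shift_bounds_cl_nat_ivl)
    also have "\<dots> = (\<Sum>j\<le>n - m. f' j * g (n - m - j))" unfolding F_def by (simp add: atMost_atLeast0 add.commute diff_diff_eq)
    also have "\<dots> = h n" using hs[of "n - m"] False unfolding pmul_def by simp
    finally show "h n = pmul F g n" by simp
  qed
qed

lemma pmul_shift_right:
  fixes f' g h :: "nat \<Rightarrow> 'a::semiring_0"
  assumes hs: "\<And>n. h (n + m) = pmul g f' n" and hz: "\<And>n. n < m \<Longrightarrow> h n = 0"
  shows "h = pmul g (\<lambda>i. if i < m then 0 else f' (i - m))"
proof
  fix n
  define F where "F = (\<lambda>i. if i < m then 0 else f' (i - m))"
  show "h n = pmul g (\<lambda>i. if i < m then 0 else f' (i - m)) n"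
    unfolding F_def[symmetric]
  proof (cases "n < m")
    case True
    then have "pmul g F n = 0" unfolding pmul_def F_def by (intro sum.neutral) auto
    then show "h n = pmul g F n" using hz True by simp
  next
    case False
    have "pmul g F n = (\<Sum>i\<le>n - m. g i * F (n - i))"
      unfolding pmul_def by (rule sum.mono_neutral_right) (auto simp: F_def)
    also have "\<dots> = (\<Sum>i\<le>n - m. g i * f' (n - m - i))"
      by (rule sum.cong) (use False in \<open>auto simp: F_def add.commute\<close>)
    also have "\<dots> = h n" using hs[of "n - m"] False unfolding pmul_def by simp
    finally show "h n = pmul g F n" by simp
  qed
qed

lemma pmul_mono_left: "pmul (\<lambda>i. if i = k then q else 0) f n = (if k \<le> n then q * f (n - k) else 0)"
proof -
  have "pmul (\<lambda>i. if i = k then q else 0) f n = (\<Sum>j\<le>n. if j = k \<and> k \<le> n then q * f (n - j) else 0)"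
    unfolding pmul_def by (rule sum.cong) auto
  also have "\<dots> = (if k \<le> n then q * f (n - k) else 0)"
    by (cases "k \<le> n") (simp_all add: sum.delta')
  finally show ?thesis .
qed

lemma pmul_zero_left[simp]: "pmul (\<lambda>i. 0) f = (\<lambda>i. 0)" unfolding pmul_def by simp

lemma pmul_one_left: "pmul pone (f::nat\<Rightarrow>'a::semiring_1) = f"
proof
  fix n
  have "pmul pone f n = (\<Sum>i\<le>n. if i = 0 then f n else 0)"
    unfolding pmul_def pone_def by (rule sum.cong) auto
  also have "\<dots> = f n" by (simp add: sum.delta')
  finally show "pmul pone f n = f n" .
qed

context dv begin

lemma rdiv:
  assumes f1: "dle d f" and f2: "f d \<noteq> 0" and f3: "wb lam c f"
    and f4: "v (f d) = ereal (c + lam * real d)" and d0: "0 < d"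
  shows "dle N E \<Longrightarrow> wb lam a E \<Longrightarrow> \<exists>Q R. (\<forall>i. E i = pmul Q f i + R i) \<and> (\<forall>i\<ge>d. R i = 0)
      \<and> dle (N - d) Q \<and> wb lam (a - c) Q \<and> wb lam a R"
proof (induction N arbitrary: E rule: less_induct)
  case (less N)
  show ?case
  proof (cases "N < d")
    case True
    show ?thesis
      apply (rule exI[of _ "\<lambda>i. 0"], rule exI[of _ E])
      using less.prems True unfolding dle_def by auto
  next
    case False
    define q where "q = E N * inverse (f d)"
    define M where "M = (\<lambda>i::nat. if i = N - d then q else 0)"
    define E' where "E' = (\<lambda>i. E i - pmul M f i)"
    have pM: "pmul M f i = (if N - d \<le> i then q * f (i - (N - d)) else 0)" for i
      unfolding M_def by (rule pmul_mono_left)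
    have "q * f d = E N" unfolding q_def using f2 by (simp add: mult.assoc)
    then have EN: "E' N = 0" unfolding E'_def pM using False by simp
    have "dle (N - 1) E'"
      unfolding dle_def
    proof (intro allI impI)
      fix i assume i: "i > N - 1"
      show "E' i = 0"
      proof (cases "i = N")
        case True then show ?thesis using EN by simp
      next
        case False
        then have "i > N" using i d0 \<open>\<not> N < d\<close> by linarith
        then have "E i = 0" "f (i - (N - d)) = 0" using less.prems(1) f1 \<open>\<not> N < d\<close> unfolding dle_def by auto
        then show ?thesis unfolding E'_def pM by simp
      qed
    qed
    have wM: "wb lam (a - c) M"
      unfolding wb_def
    proof
      fix i
      show "ereal (a - c + lam * real i) \<le> v (M i)"
      proof (cases "i = N - d \<and> E N \<noteq> 0")
        case True
        then have i: "i = N - d" and EN0: "E N \<noteq> 0" by auto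
        obtain r where r: "v (E N) = ereal r" using v_real[OF EN0] by auto
        have "ereal (a + lam * real N) \<le> v (E N)" using less.prems(2) unfolding wb_def by auto
        then have ra: "a + lam * real N \<le> r" using r by simp
        have "v q = v (E N) + - v (f d)" unfolding q_def using f2 by (simp add: v_mult v_inverse)
        also have "\<dots> = ereal (r - (c + lam * real d))" using f4 r by simp
        finally have vq: "v q = ereal (r - (c + lam * real d))" .
        have "real (N - d) = real N - real d" using \<open>\<not> N < d\<close> by auto
        then have "a - c + lam * real i \<le> r - (c + lam * real d)" using ra i by (simp add: algebra_simps)
        then show ?thesis unfolding M_def using i vq by simp
      next
        case False
        then show ?thesis unfolding M_def q_def by auto
      qed
    qed
    have "wb lam ((a - c) + c) (pmul M f)" by (rule wb_mul[OF wM f3])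
    then have wfM: "wb lam a (pmul M f)" by simp
    have "wb lam (min a a) E'" unfolding E'_def by (rule wb_diff[OF less.prems(2) wfM])
    then have wE': "wb lam a E'" by simp
    have "N - 1 < N" using False d0 by linarith
    from less.IH[OF this \<open>dle (N - 1) E'\<close> wE'] obtain Q R where
      QR: "\<forall>i. E' i = pmul Q f i + R i" "\<forall>i\<ge>d. R i = 0" "dle (N - 1 - d) Q" "wb lam (a - c) Q" "wb lam a R"
      by blast
    show ?thesis
    proof (intro exI conjI)
      show "\<forall>i. E i = pmul (\<lambda>i. Q i + M i) f i + R i"
      proof
        fix i
        have "E i = E' i + pmul M f i" unfolding E'_def by simp
        then show "E i = pmul (\<lambda>i. Q i + M i) f i + R i" using QR(1) by (simp add: pmul_add_left algebra_simps)
      qed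
      show "\<forall>i\<ge>d. R i = 0" by (rule QR(2))
      show "dle (N - d) (\<lambda>i. Q i + M i)" using QR(3) unfolding dle_def M_def by auto
      have "wb lam (min (a - c) (a - c)) (\<lambda>i. Q i + M i)" by (rule wb_add[OF QR(4) wM])
      then show "wb lam (a - c) (\<lambda>i. Q i + M i)" by simp
      show "wb lam a R" by (rule QR(5))
    qed
  qed
qed

end

context dvc begin

lemma core_r:
  assumes d0: "0 < d" and dN: "d \<le> N" and hN: "dle N h" and hw: "wb lam c h"
    and h0: "v (h 0) = ereal c" and hd: "h d \<noteq> 0" and hdv: "v (h d) = ereal (c + lam * real d)"
    and del: "0 < \<delta>" and hi: "\<And>i. i > d \<Longrightarrow> ereal (c + \<delta> + lam * real i) \<le> v (h i)"
  shows "\<exists>f g. dle d f \<and> f d = h d \<and> v (f 0) = ereal c \<and> wb lam c f \<and> dle (N - d) g \<and> h = pmul g f"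
proof -
  define f0 where "f0 = (\<lambda>i. if i \<le> d then h i else 0)"
  define Inv where "Inv = (\<lambda>k f g. dle d f \<and> f d = h d \<and> wb lam c f \<and> wb lam (c + \<delta>) (\<lambda>i. f i - f0 i)
     \<and> dle (N - d) g \<and> wb lam \<delta> (\<lambda>i. g i - pone i) \<and> dle N (\<lambda>i. h i - pmul g f i)
     \<and> wb lam (c + real (Suc k) * \<delta>) (\<lambda>i. h i - pmul g f i))"
  define PQR where "PQR = (\<lambda>k f g Q R. (\<forall>i. h i - pmul g f i = pmul Q f i + R i) \<and> (\<forall>i\<ge>d. R i = 0)
     \<and> dle (N - d) Q \<and> wb lam (real (Suc k) * \<delta>) Q \<and> wb lam (c + real (Suc k) * \<delta>) R)"
  define ch where "ch = (\<lambda>k fg. SOME QR. PQR k (fst fg) (snd fg) (fst QR) (snd QR))"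
  define step where "step = (\<lambda>k fg. ((\<lambda>i. fst fg i + snd (ch k fg) i), (\<lambda>i. snd fg i + fst (ch k fg) i)))"
  define S where "S = rec_nat (f0, pone) step"
  have S0: "S 0 = (f0, pone)" unfolding S_def by simp
  have SS: "S (Suc k) = step k (S k)" for k unfolding S_def by simp

  have exQR: "\<exists>Q R. PQR k f g Q R" if I: "Inv k f g" for k f g
  proof -
    have f: "dle d f" "f d \<noteq> 0" "wb lam c f" "v (f d) = ereal (c + lam * real d)"
      using I hd hdv unfolding Inv_def by auto
    have E: "dle N (\<lambda>i. h i - pmul g f i)" "wb lam (c + real (Suc k) * \<delta>) (\<lambda>i. h i - pmul g f i)"
      using I unfolding Inv_def by auto
    from rdiv[OF f d0 E] show ?thesis unfolding PQR_def by simp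
  qed

  have step_inv: "Inv (Suc k) (\<lambda>i. f i + R i) (\<lambda>i. g i + Q i)" if I: "Inv k f g" and P: "PQR k f g Q R" for k f g Q R
  proof -
    from I have I1: "dle d f" "f d = h d" "wb lam c f" "wb lam (c + \<delta>) (\<lambda>i. f i - f0 i)"
      "dle (N - d) g" "wb lam \<delta> (\<lambda>i. g i - pone i)"
      unfolding Inv_def by auto
    from P have P1: "\<And>i. h i - pmul g f i = pmul Q f i + R i" "\<And>i. i \<ge> d \<Longrightarrow> R i = 0"
      "dle (N - d) Q" "wb lam (real (Suc k) * \<delta>) Q" "wb lam (c + real (Suc k) * \<delta>) R"
      unfolding PQR_def by auto
    have kd: "\<delta> \<le> real (Suc k) * \<delta>" using del by simp
    have a1: "dle d (\<lambda>i. f i + R i)" using I1(1) P1(2) unfolding dle_def by auto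
    have a2: "f d + R d = h d" using I1(2) P1(2) by simp
    have "wb lam (min c (c + real (Suc k) * \<delta>)) (\<lambda>i. f i + R i)" by (rule wb_add[OF I1(3) P1(5)])
    then have a3: "wb lam c (\<lambda>i. f i + R i)" by (rule wb_mono) (use del in simp)
    have "wb lam (min (c + \<delta>) (c + real (Suc k) * \<delta>)) (\<lambda>i. (f i - f0 i) + R i)" by (rule wb_add[OF I1(4) P1(5)])
    then have "wb lam (c + \<delta>) (\<lambda>i. (f i - f0 i) + R i)" by (rule wb_mono) (use kd in simp)
    moreover have "(\<lambda>i. (f i - f0 i) + R i) = (\<lambda>i. (f i + R i) - f0 i)" by (auto simp: algebra_simps)
    ultimately have a4: "wb lam (c + \<delta>) (\<lambda>i. (f i + R i) - f0 i)" by simp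
    have a5: "dle (N - d) (\<lambda>i. g i + Q i)" using I1(5) P1(3) unfolding dle_def by auto
    have "wb lam (min \<delta> (real (Suc k) * \<delta>)) (\<lambda>i. (g i - pone i) + Q i)" by (rule wb_add[OF I1(6) P1(4)])
    then have "wb lam \<delta> (\<lambda>i. (g i - pone i) + Q i)" by (rule wb_mono) (use kd in simp)
    moreover have "(\<lambda>i. (g i - pone i) + Q i) = (\<lambda>i. (g i + Q i) - pone i)" by (auto simp: algebra_simps)
    ultimately have a6: "wb lam \<delta> (\<lambda>i. (g i + Q i) - pone i)" by simp
    define G where "G = (\<lambda>i. (g i + Q i) - pone i)"
    have eqE: "h i - pmul (\<lambda>i. g i + Q i) (\<lambda>i. f i + R i) i = - pmul G R i" for i
    proof -
      have "pmul G R i = pmul g R i + pmul Q R i - R i"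
        unfolding G_def by (simp add: pmul_diff_left pmul_add_left pmul_one_left)
      moreover have "pmul (\<lambda>i. g i + Q i) (\<lambda>i. f i + R i) i = pmul g f i + pmul Q f i + pmul g R i + pmul Q R i"
        by (simp add: pmul_add_right pmul_add_left)
      ultimately show ?thesis using P1(1)[of i] by (simp add: algebra_simps)
    qed
    have Rd: "dle (d - 1) R" using P1(2) unfolding dle_def by auto
    have Gd: "dle (N - d) G" using a5 unfolding G_def dle_def pone_def by auto
    have "dle ((N - d) + (d - 1)) (pmul G R)" by (rule dle_pmul[OF Gd Rd])
    then have a7: "dle N (\<lambda>i. h i - pmul (\<lambda>i. g i + Q i) (\<lambda>i. f i + R i) i)"
      unfolding eqE dle_def using d0 dN by auto
    have "wb lam (\<delta> + (c + real (Suc k) * \<delta>)) (pmul G R)" unfolding G_def by (rule wb_mul[OF a6 P1(5)])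
    then have a8: "wb lam (c + real (Suc (Suc k)) * \<delta>) (\<lambda>i. h i - pmul (\<lambda>i. g i + Q i) (\<lambda>i. f i + R i) i)"
      unfolding eqE by (auto simp: algebra_simps intro: wb_minus)
    show ?thesis unfolding Inv_def using a1 a2 a3 a4 a5 a6 a7 a8 by simp
  qed

  have Inv0: "Inv 0 f0 pone"
  proof -
    have "dle d f0" unfolding f0_def dle_def by auto
    moreover have "wb lam c f0" using hw unfolding f0_def wb_def by auto
    moreover have "dle (N - d) (pone :: nat \<Rightarrow> 'a)" unfolding pone_def dle_def by auto
    moreover have "dle N (\<lambda>i. h i - pmul pone f0 i)" using hN unfolding pmul_one_left f0_def dle_def by auto
    moreover have "wb lam (c + real (Suc 0) * \<delta>) (\<lambda>i. h i - pmul pone f0 i)"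
      unfolding pmul_one_left wb_def f0_def using hi by (auto simp: algebra_simps)
    ultimately show ?thesis unfolding Inv_def f0_def by simp
  qed
  define fK where "fK = (\<lambda>K. fst (S K))"
  define gK where "gK = (\<lambda>K. snd (S K))"
  define RR where "RR = (\<lambda>K. snd (ch K (S K)))"
  define QQ where "QQ = (\<lambda>K. fst (ch K (S K)))"
  have all: "Inv k (fK k) (gK k) \<and> PQR k (fK k) (gK k) (QQ k) (RR k)" for k
  proof (induction k)
    case 0
    have I: "Inv 0 (fK 0) (gK 0)" using Inv0 S0 unfolding fK_def gK_def by simp
    then have "\<exists>QR. PQR 0 (fK 0) (gK 0) (fst QR) (snd QR)" using exQR by auto
    then have "PQR 0 (fK 0) (gK 0) (QQ 0) (RR 0)" unfolding QQ_def RR_def ch_def fK_def gK_def by (rule someI_ex)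
    then show ?case using I by simp
  next
    case (Suc k)
    have "S (Suc k) = ((\<lambda>i. fK k i + RR k i), (\<lambda>i. gK k i + QQ k i))"
      unfolding SS step_def fK_def gK_def RR_def QQ_def by simp
    then have "fK (Suc k) = (\<lambda>i. fK k i + RR k i)" "gK (Suc k) = (\<lambda>i. gK k i + QQ k i)"
      unfolding fK_def gK_def by auto
    then have I: "Inv (Suc k) (fK (Suc k)) (gK (Suc k))" using step_inv Suc by auto
    then have "\<exists>QR. PQR (Suc k) (fK (Suc k)) (gK (Suc k)) (fst QR) (snd QR)" using exQR by auto
    then have "PQR (Suc k) (fK (Suc k)) (gK (Suc k)) (QQ (Suc k)) (RR (Suc k))"
      unfolding QQ_def RR_def ch_def fK_def gK_def by (rule someI_ex)
    then show ?case using I by simp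
  qed
  have fS: "fK (Suc k) i = fK k i + RR k i" and gS: "gK (Suc k) i = gK k i + QQ k i" for k i
    unfolding SS step_def fK_def gK_def RR_def QQ_def by simp_all

  have I_K: "dle d (fK K)" "fK K d = h d" "wb lam c (fK K)" "wb lam (c + \<delta>) (\<lambda>i. fK K i - f0 i)"
     "dle (N - d) (gK K)" "wb lam (c + real (Suc K) * \<delta>) (\<lambda>i. h i - pmul (gK K) (fK K) i)"
     "wb lam (real (Suc K) * \<delta>) (QQ K)" "wb lam (c + real (Suc K) * \<delta>) (RR K)" for K
    using all[of K] unfolding Inv_def PQR_def by auto
  have bnd: "ereal (a + real (Suc K) * \<delta> + lam * real i) \<le> v (p i) \<Longrightarrow> ereal ((a + \<delta> + lam * real i) + real K * \<delta>) \<le> v (p i)"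
    for a K i and p :: "nat \<Rightarrow> 'a" by (simp add: algebra_simps)
  have "\<forall>i. \<exists>s. vlim (\<lambda>K. s - fK K i)"
  proof
    fix i
    have "vlim (\<lambda>j. RR j i)"
      by (rule vlim_bound[OF del, of "c + \<delta> + lam * real i"]) (rule bnd, use I_K(8) in \<open>auto simp: wb_def\<close>)
    then show "\<exists>s. vlim (\<lambda>K. s - fK K i)" by (intro lim_exists) (simp add: fS)
  qed
  then obtain F where F: "\<And>i. vlim (\<lambda>K. F i - fK K i)" by metis
  have "\<forall>i. \<exists>s. vlim (\<lambda>K. s - gK K i)"
  proof
    fix i
    have "vlim (\<lambda>j. QQ j i)"
      by (rule vlim_bound[OF del, of "0 + \<delta> + lam * real i"]) (rule bnd, use I_K(7) in \<open>auto simp: wb_def\<close>)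
    then show "\<exists>s. vlim (\<lambda>K. s - gK K i)" by (intro lim_exists) (simp add: gS)
  qed
  then obtain G where G: "\<And>i. vlim (\<lambda>K. G i - gK K i)" by metis
  have dF: "dle d F" unfolding dle_def
  proof (intro allI impI)
    fix i assume "d < i"
    then have "\<And>K. F i - fK K i = F i" using I_K(1) unfolding dle_def by auto
    then show "F i = 0" using F[of i] vlim_eq by metis
  qed
  have dG: "dle (N - d) G" unfolding dle_def
  proof (intro allI impI)
    fix i assume "N - d < i"
    then have "\<And>K. G i - gK K i = G i" using I_K(5) unfolding dle_def by auto
    then show "G i = 0" using G[of i] vlim_eq by metis
  qed
  have Fd: "F d = h d"
  proof -
    have "\<And>K. F d - fK K d = F d - h d" using I_K(2) by auto
    then have "F d - h d = 0" using F[of d] vlim_eq by metis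
    then show ?thesis by simp
  qed
  have wF: "wb lam c F" unfolding wb_def
  proof
    fix i
    obtain K where K: "ereal (c + lam * real i) < v (F i - fK K i)" using vlim_eventually[OF F] by blast
    have "ereal (c + lam * real i) \<le> v (fK K i)" using I_K(3) unfolding wb_def by auto
    then have "ereal (c + lam * real i) \<le> min (v (F i - fK K i)) (v (fK K i))" using K by simp
    also have "\<dots> \<le> v ((F i - fK K i) + fK K i)" by (rule v_add)
    finally show "ereal (c + lam * real i) \<le> v (F i)" by simp
  qed
  have F0: "v (F 0) = ereal c"
  proof -
    obtain K where K: "ereal (c + \<delta>) < v (F 0 - fK K 0)" using vlim_eventually[OF F] by blast
    have "ereal (c + \<delta> + lam * real 0) \<le> v (fK K 0 - f0 0)" using I_K(4) unfolding wb_def by blast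
    then have "ereal (c + \<delta>) \<le> v (fK K 0 - f0 0)" by simp
    then have "ereal (c + \<delta>) \<le> min (v (F 0 - fK K 0)) (v (fK K 0 - f0 0))" using K by simp
    also have "\<dots> \<le> v ((F 0 - fK K 0) + (fK K 0 - f0 0))" by (rule v_add)
    finally have "ereal (c + \<delta>) \<le> v (F 0 - h 0)" unfolding f0_def by simp
    moreover have "ereal c < ereal (c + \<delta>)" using del by simp
    ultimately have "v (h 0) < v (F 0 - h 0)" unfolding h0 by (rule order_less_le_trans[rotated])
    then have "v (h 0 + (F 0 - h 0)) = v (h 0)" by (rule v_strict)
    then show ?thesis using h0 by simp
  qed
  have hFG: "h = pmul G F"
  proof
    fix n
    define a where "a = (\<lambda>K. (h n - pmul (gK K) (fK K) n) - pmul G (\<lambda>i. F i - fK K i) n - pmul (\<lambda>i. G i - gK K i) (fK K) n)"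
    have aK: "a K = h n - pmul G F n" for K
      unfolding a_def pmul_diff_left pmul_diff_right by (simp add: algebra_simps)
    have v1: "vlim (\<lambda>K. h n - pmul (gK K) (fK K) n)"
      by (rule vlim_bound[OF del, of "c + \<delta> + lam * real n"]) (rule bnd, use I_K(6) in \<open>auto simp: wb_def\<close>)
    have v2: "vlim (\<lambda>K. pmul G (\<lambda>i. F i - fK K i) n)"
      unfolding pmul_def
    proof (rule vlim_sum)
      fix i assume "i \<in> {..n}"
      obtain M where "ereal M \<le> v (G i)" using v_lower by blast
      then show "vlim (\<lambda>K. G i * (F (n - i) - fK K (n - i)))" by (intro vlim_mult_left[OF F])
    qed simp
    have v3: "vlim (\<lambda>K. pmul (\<lambda>i. G i - gK K i) (fK K) n)"
      unfolding pmul_def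
    proof (rule vlim_sum)
      fix i assume "i \<in> {..n}"
      have "\<And>K. ereal (c + lam * real (n - i)) \<le> v (fK K (n - i))" using I_K(3) unfolding wb_def by auto
      then show "vlim (\<lambda>K. (G i - gK K i) * fK K (n - i))" by (intro vlim_mult_right[OF G])
    qed simp
    have "vlim a" unfolding a_def by (intro vlim_diff v1 v2 v3)
    then have "h n - pmul G F n = 0" using aK by (rule vlim_eq)
    then show "h n = pmul G F n" by simp
  qed
  show ?thesis using dF Fd F0 wF dG hFG by blast
qed
end

context dvc begin

lemma shift_prep:
  assumes md: "m < d" and hN: "dle N h" and hw: "wb lam c h"
    and hm: "v (h m) = ereal (c + lam * real m)" and hd: "h d \<noteq> 0" and hdv: "v (h d) = ereal (c + lam * real d)"
    and hi: "\<forall>i. d < i \<longrightarrow> ereal (c + \<delta> + lam * real i) \<le> v (h i)"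
  shows "0 < d - m" "d - m \<le> N - m" "dle (N - m) (\<lambda>i. h (i + m))" "wb lam (c + lam * real m) (\<lambda>i. h (i + m))"
    "v (h (0 + m)) = ereal (c + lam * real m)" "h (d - m + m) \<noteq> 0"
    "v (h (d - m + m)) = ereal ((c + lam * real m) + lam * real (d - m))"
    "\<And>i. d - m < i \<Longrightarrow> ereal ((c + lam * real m) + \<delta> + lam * real i) \<le> v (h (i + m))"
proof -
  have dN: "d \<le> N" using hN hd unfolding dle_def by (meson not_le)
  show "0 < d - m" using md by simp
  show "d - m \<le> N - m" using dN by simp
  show "dle (N - m) (\<lambda>i. h (i + m))" using hN unfolding dle_def by auto
  show "wb lam (c + lam * real m) (\<lambda>i. h (i + m))" unfolding wb_def
  proof
    fix i
    have "ereal (c + lam * real (i + m)) \<le> v (h (i + m))" using hw unfolding wb_def by blast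
    then show "ereal (c + lam * real m + lam * real i) \<le> v (h (i + m))" by (simp add: algebra_simps)
  qed
  show "v (h (0 + m)) = ereal (c + lam * real m)" using hm by simp
  have dm: "d - m + m = d" using md by simp
  show "h (d - m + m) \<noteq> 0" using hd dm by simp
  have "real (d - m) = real d - real m" using md by simp
  then show "v (h (d - m + m)) = ereal ((c + lam * real m) + lam * real (d - m))" using hdv dm by (simp add: algebra_simps)
  fix i assume "d - m < i"
  then have "d < i + m" by simp
  then show "ereal ((c + lam * real m) + \<delta> + lam * real i) \<le> v (h (i + m))" using hi[rule_format, of "i + m"] by (simp add: algebra_simps)
qed

lemma core_shift:
  assumes md: "m < d" and hN: "dle N h" and hz: "\<And>i. i < m \<Longrightarrow> h i = 0" and hw: "wb lam c h"
    and hm: "v (h m) = ereal (c + lam * real m)" and hd: "h d \<noteq> 0" and hdv: "v (h d) = ereal (c + lam * real d)"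
    and del: "0 < \<delta>" and hi: "\<And>i. d < i \<Longrightarrow> ereal (c + \<delta> + lam * real i) \<le> v (h i)"
  shows "\<exists>f g. dle d f \<and> (\<forall>i<m. f i = 0) \<and> f d = h d \<and> v (f m) = v (h m) \<and> wb lam c f \<and> is_poly g \<and> h = pmul f g"
proof -
  have hi': "\<forall>i. d < i \<longrightarrow> ereal (c + \<delta> + lam * real i) \<le> v (h i)" using hi by blast
  note P = shift_prep[OF md hN hw hm hd hdv hi']
  obtain f' g where fg: "dle (d - m) f'" "f' (d - m) = h (d - m + m)" "v (f' 0) = ereal (c + lam * real m)"
    "wb lam (c + lam * real m) f'" "dle (N - m - (d - m)) g" "(\<lambda>i. h (i + m)) = pmul f' g"
    using core[where d="d - m" and N="N - m" and h="\<lambda>i. h (i + m)" and lam=lam and c="c + lam * real m" and \<delta>=\<delta>, OF P(1-2) P(3-4) P(5) P(6-7) del P(8)] by auto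
  define f where "f = (\<lambda>i. if i < m then 0 else f' (i - m))"
  have dm: "d - m + m = d" using md by simp
  show ?thesis
  proof (rule exI[of _ f], rule exI[of _ g], intro conjI allI impI)
    show "dle d f" unfolding dle_def
    proof (intro allI impI)
      fix i assume "d < i"
      then have "i - m > d - m" "\<not> i < m" using md by auto
      then show "f i = 0" using fg(1) unfolding f_def dle_def by auto
    qed
    show "f i = 0" if "i < m" for i using that unfolding f_def by simp
    show "f d = h d" using fg(2) md dm unfolding f_def by simp
    show "v (f m) = v (h m)" using fg(3) hm unfolding f_def by simp
    show "wb lam c f" unfolding wb_def
    proof
      fix i show "ereal (c + lam * real i) \<le> v (f i)"
      proof (cases "i < m")
        case True then show ?thesis unfolding f_def by simp
      next
        case False
        then have e: "c + lam * real m + lam * real (i - m) = c + lam * real i" by (simp add: algebra_simps)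
        have "ereal (c + lam * real m + lam * real (i - m)) \<le> v (f' (i - m))" using fg(4) unfolding wb_def by blast
        then show ?thesis using False unfolding f_def e by simp
      qed
    qed
    show "is_poly g" using fg(5) unfolding dle_def is_poly_def
      by (metis (mono_tags, lifting) finite_atMost finite_subset mem_Collect_eq not_le subsetI atMost_iff)
    show "h = pmul f g" unfolding f_def
      by (rule pmul_shift_left) (use fg(6) hz in \<open>auto dest: fun_cong\<close>)
  qed
qed

lemma core_shift_r:
  assumes md: "m < d" and hN: "dle N h" and hz: "\<And>i. i < m \<Longrightarrow> h i = 0" and hw: "wb lam c h"
    and hm: "v (h m) = ereal (c + lam * real m)" and hd: "h d \<noteq> 0" and hdv: "v (h d) = ereal (c + lam * real d)"
    and del: "0 < \<delta>" and hi: "\<And>i. d < i \<Longrightarrow> ereal (c + \<delta> + lam * real i) \<le> v (h i)"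
  shows "\<exists>f g. dle d f \<and> (\<forall>i<m. f i = 0) \<and> f d = h d \<and> v (f m) = v (h m) \<and> wb lam c f \<and> is_poly g \<and> h = pmul g f"
proof -
  have hi': "\<forall>i. d < i \<longrightarrow> ereal (c + \<delta> + lam * real i) \<le> v (h i)" using hi by blast
  note P = shift_prep[OF md hN hw hm hd hdv hi']
  obtain f' g where fg: "dle (d - m) f'" "f' (d - m) = h (d - m + m)" "v (f' 0) = ereal (c + lam * real m)"
    "wb lam (c + lam * real m) f'" "dle (N - m - (d - m)) g" "(\<lambda>i. h (i + m)) = pmul g f'"
    using core_r[where d="d - m" and N="N - m" and h="\<lambda>i. h (i + m)" and lam=lam and c="c + lam * real m" and \<delta>=\<delta>, OF P(1-2) P(3-4) P(5) P(6-7) del P(8)] by auto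
  define f where "f = (\<lambda>i. if i < m then 0 else f' (i - m))"
  have dm: "d - m + m = d" using md by simp
  show ?thesis
  proof (rule exI[of _ f], rule exI[of _ g], intro conjI allI impI)
    show "dle d f" unfolding dle_def
    proof (intro allI impI)
      fix i assume "d < i"
      then have "i - m > d - m" "\<not> i < m" using md by auto
      then show "f i = 0" using fg(1) unfolding f_def dle_def by auto
    qed
    show "f i = 0" if "i < m" for i using that unfolding f_def by simp
    show "f d = h d" using fg(2) md dm unfolding f_def by simp
    show "v (f m) = v (h m)" using fg(3) hm unfolding f_def by simp
    show "wb lam c f" unfolding wb_def
    proof
      fix i show "ereal (c + lam * real i) \<le> v (f i)"
      proof (cases "i < m")
        case True then show ?thesis unfolding f_def by simp
      next
        case False
        then have e: "c + lam * real m + lam * real (i - m) = c + lam * real i" by (simp add: algebra_simps)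
        have "ereal (c + lam * real m + lam * real (i - m)) \<le> v (f' (i - m))" using fg(4) unfolding wb_def by blast
        then show ?thesis using False unfolding f_def e by simp
      qed
    qed
    show "is_poly g" using fg(5) unfolding dle_def is_poly_def
      by (metis (mono_tags, lifting) finite_atMost finite_subset mem_Collect_eq not_le subsetI atMost_iff)
    show "h = pmul g f" unfolding f_def
      by (rule pmul_shift_right) (use fg(6) hz in \<open>auto dest: fun_cong\<close>)
  qed
qed

end

lemma final_part:
  fixes v :: "'a::division_ring \<Rightarrow> ereal" and h :: "nat \<Rightarrow> 'a" and d :: nat and e :: real
  assumes dv: "discrete_valuation v" and cv: "complete_valuation v" and poly: "is_poly h"
    and bp: "(real d, e) \<in> np_break_points v h"
    and minb: "\<forall>q \<in> np_break_points v h. real d \<le> fst q"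
    and side: "side = (\<lambda>f g. pmul f g) \<or> side = (\<lambda>f g. pmul g f)"
  shows "\<exists>f g. is_poly f \<and> is_poly g \<and> pdeg f = d \<and>
            newton_polygon v f = closed_segment (np_left_end v h) (real d, e) \<and> h = side f g"
proof -
  interpret dvc v using dv cv by unfold_locales
  define w where "w = (\<lambda>i. real_of_ereal (v (h i)))"
  obtain m lam where fe: "m < d" "h m \<noteq> 0" "h d \<noteq> 0" "\<forall>i<m. h i = 0" "e = w d"
    "w d = w m + lam * (real d - real m)"
    "\<forall>i. h i \<noteq> 0 \<longrightarrow> w m + lam * (real i - real m) \<le> w i"
    "\<forall>i. h i \<noteq> 0 \<and> d < i \<longrightarrow> w m + lam * (real i - real m) < w i"
    "np_left_end v h = (real m, w m)"
    using first_edge[OF poly bp minb] unfolding w_def by blast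
  define c where "c = w m - lam * real m"
  have cl: "c + lam * real i = w m + lam * (real i - real m)" for i unfolding c_def by (simp add: algebra_simps)
  have vw: "v (h i) = ereal (w i)" if "h i \<noteq> 0" for i unfolding w_def by (rule v_real[OF that])
  obtain N where hN: "dle N h" using is_poly_dle[OF poly] by blast
  have hw: "wb lam c h" unfolding wb_def
  proof
    fix i show "ereal (c + lam * real i) \<le> v (h i)"
    proof (cases "h i = 0")
      case True then show ?thesis by simp
    next
      case False then show ?thesis using fe(7) vw[OF False] unfolding cl by simp
    qed
  qed
  have hm: "v (h m) = ereal (c + lam * real m)" using vw[OF fe(2)] unfolding cl by simp
  have hdv: "v (h d) = ereal (c + lam * real d)" using vw[OF fe(3)] fe(6) unfolding cl by simp
  define Vs where "Vs = {i. h i \<noteq> 0 \<and> d < i}"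
  have finVs: "finite Vs" using poly unfolding is_poly_def Vs_def by simp
  define \<delta> where "\<delta> = Min (insert 1 ((\<lambda>i. w i - (c + lam * real i)) ` Vs))"
  have del: "0 < \<delta>"
  proof -
    have "\<forall>x\<in>insert 1 ((\<lambda>i. w i - (c + lam * real i)) ` Vs). x > 0"
      using fe(8) unfolding Vs_def cl by auto
    then show ?thesis unfolding \<delta>_def using finVs by simp
  qed
  have hi: "ereal (c + \<delta> + lam * real i) \<le> v (h i)" if "d < i" for i
  proof (cases "h i = 0")
    case True then show ?thesis by simp
  next
    case False
    then have "i \<in> Vs" using that unfolding Vs_def by simp
    then have "\<delta> \<le> w i - (c + lam * real i)" unfolding \<delta>_def using finVs by simp
    then show ?thesis using vw[OF False] by simp
  qed
  have ex: "\<exists>f g. dle d f \<and> (\<forall>i<m. f i = 0) \<and> f d = h d \<and> v (f m) = v (h m) \<and> wb lam c f \<and> is_poly g \<and> h = side f g"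
    using side
  proof
    assume s: "side = (\<lambda>f g. pmul f g)"
    show ?thesis unfolding s using core_shift[OF fe(1) hN _ hw hm fe(3) hdv del hi] fe(4) by simp
  next
    assume s: "side = (\<lambda>f g. pmul g f)"
    show ?thesis unfolding s using core_shift_r[OF fe(1) hN _ hw hm fe(3) hdv del hi] fe(4) by simp
  qed
  then obtain f g where fg: "dle d f" "\<forall>i<m. f i = 0" "f d = h d" "v (f m) = v (h m)" "wb lam c f" "is_poly g" "h = side f g"
    by blast
  have fm: "f m \<noteq> 0" using fg(4) fe(2) v_inf by (metis ereal.distinct(1) vw)
  have fd: "f d \<noteq> 0" using fg(3) fe(3) by simp
  have supp: "m \<le> i \<and> i \<le> d" if "f i \<noteq> 0" for i
    using that fg(1,2) unfolding dle_def by (meson not_le)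
  have above: "lam * real i + c \<le> real_of_ereal (v (f i))" if "f i \<noteq> 0" for i
  proof -
    have "ereal (c + lam * real i) \<le> v (f i)" using fg(5) unfolding wb_def by blast
    then show ?thesis using v_real[OF that] by (metis add.commute ereal_less_eq(3))
  qed
  have va: "real_of_ereal (v (f m)) = lam * real m + c" using fg(4) hm by simp
  have vb: "real_of_ereal (v (f d)) = lam * real d + c" using fg(3) hdv by simp
  have NPf: "newton_polygon v f = closed_segment (real m, lam * real m + c) (real d, lam * real d + c)"
    by (rule NP_seg[OF fe(1) fm fd supp above va vb])
  have "lam * real m + c = w m" "lam * real d + c = w d" using cl[of m] cl[of d] fe(6) by (simp_all add: algebra_simps)
  then have NPf': "newton_polygon v f = closed_segment (np_left_end v h) (real d, e)"
    unfolding NPf fe(9) fe(5) by simp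
  have polyf: "is_poly f" using fg(1) by (rule dle_is_poly)
  have pd: "pdeg f = d"
  proof -
    have ne: "{i. f i \<noteq> 0} \<noteq> {}" using fd by auto
    have "Max {i. f i \<noteq> 0} = d"
      by (rule Max_eqI) (use polyf fd supp in \<open>auto simp: is_poly_def\<close>)
    then show ?thesis unfolding pdeg_def using ne by (simp only: if_False)
  qed
  show ?thesis using polyf fg(6) pd NPf' fg(7) by blast
qed

theorem proposition2p7:
  fixes v :: "'a::division_ring \<Rightarrow> ereal"
    and h :: "nat \<Rightarrow> 'a" and d :: nat and e :: real
  assumes "discrete_valuation v" and "complete_valuation v"
    and "is_poly h"
    and "np_num_edges v h \<ge> 2"
    and "(real d, e) \<in> np_break_points v h"
    and "\<forall>q \<in> np_break_points v h. real d \<le> fst q"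
  shows "(\<exists>f g. is_poly f \<and> is_poly g \<and> pdeg f = d \<and>
            newton_polygon v f = closed_segment (np_left_end v h) (real d, e) \<and>
            h = pmul f g)
       \<and> (\<exists>f g. is_poly f \<and> is_poly g \<and> pdeg f = d \<and>
            newton_polygon v f = closed_segment (np_left_end v h) (real d, e) \<and>
            h = pmul g f)"
proof -
  have 1: "\<exists>f g. is_poly f \<and> is_poly g \<and> pdeg f = d \<and>
            newton_polygon v f = closed_segment (np_left_end v h) (real d, e) \<and> h = pmul f g"
    using final_part[where side="\<lambda>f g. pmul f g", OF assms(1,2,3,5,6)] by simp
  have 2: "\<exists>f g. is_poly f \<and> is_poly g \<and> pdeg f = d \<and>
            newton_polygon v f = closed_segment (np_left_end v h) (real d, e) \<and> h = pmul g f"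
    using final_part[where side="\<lambda>f g. pmul g f", OF assms(1,2,3,5,6)] by simp
  show ?thesis using 1 2 by blast
qed

end
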